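(* Let $f,g\in\mathcal{H}$ be strongly non-polynomial functions such that $f(t)\gg t^{\delta_1}$ and $g(t)\gg t^{\delta_2}$ for some $\delta_1,\delta_2>0$, and $g(t)\ll f(t)$. Then: (i) $S(f,k)=S(g,k)$ for some $k\in\mathbb{N}$ if and only if $f\sim g$; (ii) if $S(f,k)\cap S(g,\ell)\ne\emptyset$ then $k\ge\ell$; moreover, if the function $|f^{(k)}(t)|^{-1/k}$ belongs to $S(g,\ell)$ and $f\not\sim g$, then $k\ge\ell+1$; (iii) there exist infinitely many pairs of integers $(k,\ell)$ with $S(f,k)\cap S(g,\ell)\ne\emptyset$.
   Context: $\mathcal{H}$ is a fixed Hardy field (subfield of germs at $+\infty$ of real functions, closed under differentiation) containing the logarithmico-exponential functions, closed under composition and compositional inversion. $f$ is strongly non-polynomial if $t^d\prec f(t)\prec t^{d+1}$ for some integer $d\ge0$. $f\prec g$: $f/g\to0$; $f\ll g$: $|f|\le C|g|$ eventually; $f\sim g$: $f/g$ tends to a finite non-zero limit. For such $f$ and $k$ large enough that $f^{(k)}(t)\to0$, define $S(f,k)=\{g\in\mathcal{H}:\ |f^{(k)}(t)|^{-1/k}\preceq g(t)\prec|f^{(k+1)}(t)|^{-1/(k+1)}\}$, where $u\preceq v$ means that $\lim_{t\to\infty}|v(t)/u(t)|$ is non-zero (possibly infinite). *)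

theory Defs
  imports "HOL-Analysis.Analysis"
begin

text \<open>Germs at +infinity are represented by functions real => real; a set of germs is
  represented by the set of all its representatives (closed under eventual equality).\<close>

definition hardy_field :: "(real \<Rightarrow> real) set \<Rightarrow> bool" where
  "hardy_field H \<longleftrightarrow>
     (\<forall>f g. f \<in> H \<longrightarrow> (\<forall>\<^sub>F x in at_top. f x = g x) \<longrightarrow> g \<in> H) \<and>
     (\<lambda>_. 0) \<in> H \<and> (\<lambda>_. 1) \<in> H \<and>
     (\<forall>f\<in>H. \<forall>g\<in>H. (\<lambda>x. f x + g x) \<in> H) \<and>
     (\<forall>f\<in>H. (\<lambda>x. - f x) \<in> H) \<and>
     (\<forall>f\<in>H. \<forall>g\<in>H. (\<lambda>x. f x * g x) \<in> H) \<and>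
     (\<forall>f\<in>H. (\<forall>\<^sub>F x in at_top. f x = 0) \<or> (\<exists>h\<in>H. \<forall>\<^sub>F x in at_top. f x * h x = 1)) \<and>
     (\<forall>f\<in>H. (\<forall>\<^sub>F x in at_top. f differentiable (at x)) \<and> deriv f \<in> H)"

inductive le_fun :: "(real \<Rightarrow> real) \<Rightarrow> bool" where
  le_const: "le_fun (\<lambda>_. c)"
| le_ident: "le_fun (\<lambda>x. x)"
| le_add: "le_fun f \<Longrightarrow> le_fun g \<Longrightarrow> le_fun (\<lambda>x. f x + g x)"
| le_minus: "le_fun f \<Longrightarrow> le_fun (\<lambda>x. - f x)"
| le_mult: "le_fun f \<Longrightarrow> le_fun g \<Longrightarrow> le_fun (\<lambda>x. f x * g x)"
| le_divide: "le_fun f \<Longrightarrow> le_fun g \<Longrightarrow> (\<forall>\<^sub>F x in at_top. g x \<noteq> 0) \<Longrightarrow>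
    le_fun (\<lambda>x. f x / g x)"
| le_exp: "le_fun f \<Longrightarrow> le_fun (\<lambda>x. exp (f x))"
| le_ln: "le_fun f \<Longrightarrow> (\<forall>\<^sub>F x in at_top. f x > 0) \<Longrightarrow> le_fun (\<lambda>x. ln (f x))"

definition good_hardy_field :: "(real \<Rightarrow> real) set \<Rightarrow> bool" where
  "good_hardy_field H \<longleftrightarrow> hardy_field H \<and>
     (\<forall>f. le_fun f \<longrightarrow> f \<in> H) \<and>
     (\<forall>f\<in>H. \<forall>g\<in>H. filterlim g at_top at_top \<longrightarrow> (\<lambda>x. f (g x)) \<in> H) \<and>
     (\<forall>f\<in>H. filterlim f at_top at_top \<longrightarrow>
        (\<exists>h\<in>H. filterlim h at_top at_top \<and> (\<forall>\<^sub>F x in at_top. f (h x) = x)))"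

definition hderiv :: "nat \<Rightarrow> (real \<Rightarrow> real) \<Rightarrow> real \<Rightarrow> real" where
  "hderiv k f = (deriv ^^ k) f"

definition sprec :: "(real \<Rightarrow> real) \<Rightarrow> (real \<Rightarrow> real) \<Rightarrow> bool" where
  "sprec f g \<longleftrightarrow> ((\<lambda>t. f t / g t) \<longlongrightarrow> 0) at_top"

definition lless :: "(real \<Rightarrow> real) \<Rightarrow> (real \<Rightarrow> real) \<Rightarrow> bool" where
  "lless f g \<longleftrightarrow> (\<exists>C. \<forall>\<^sub>F t in at_top. \<bar>f t\<bar> \<le> C * \<bar>g t\<bar>)"

definition hsim :: "(real \<Rightarrow> real) \<Rightarrow> (real \<Rightarrow> real) \<Rightarrow> bool" where
  "hsim f g \<longleftrightarrow> (\<exists>L. L \<noteq> 0 \<and> ((\<lambda>t. f t / g t) \<longlongrightarrow> L) at_top)"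

definition wprec :: "(real \<Rightarrow> real) \<Rightarrow> (real \<Rightarrow> real) \<Rightarrow> bool" where
  "wprec u v \<longleftrightarrow> (\<exists>L>0. ((\<lambda>t. \<bar>v t / u t\<bar>) \<longlongrightarrow> L) at_top) \<or>
                  filterlim (\<lambda>t. \<bar>v t / u t\<bar>) at_top at_top"

definition strongly_nonpoly :: "(real \<Rightarrow> real) \<Rightarrow> bool" where
  "strongly_nonpoly f \<longleftrightarrow> (\<exists>d::nat. sprec (\<lambda>t. t ^ d) f \<and> sprec f (\<lambda>t. t ^ (d + 1)))"

definition admissible :: "(real \<Rightarrow> real) \<Rightarrow> nat \<Rightarrow> bool" where
  "admissible f k \<longleftrightarrow> (hderiv k f \<longlongrightarrow> 0) at_top"

definition rootderiv :: "(real \<Rightarrow> real) \<Rightarrow> nat \<Rightarrow> real \<Rightarrow> real" where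
  "rootderiv f k = (\<lambda>t. \<bar>hderiv k f t\<bar> powr (- 1 / real k))"

definition S :: "(real \<Rightarrow> real) set \<Rightarrow> (real \<Rightarrow> real) \<Rightarrow> nat \<Rightarrow> (real \<Rightarrow> real) set" where
  "S H f k = {g \<in> H. wprec (rootderiv f k) g \<and> sprec g (rootderiv f (k + 1))}"

end

theory Submission
  imports Defs
begin

lemma hderiv_Suc: "hderiv (Suc k) f = deriv (hderiv k f)"
  by (simp add: hderiv_def)

lemma hderiv_0[simp]: "hderiv 0 f = f"
  by (simp add: hderiv_def)

context
  fixes H :: "(real \<Rightarrow> real) set"
  assumes HF: "good_hardy_field H"
begin

lemma HH: "hardy_field H" using HF by (simp add: good_hardy_field_def)

lemma H_ev: "f \<in> H \<Longrightarrow> eventually (\<lambda>x. f x = g x) at_top \<Longrightarrow> g \<in> H"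
  using HH unfolding hardy_field_def by blast

lemma H_le: "le_fun f \<Longrightarrow> f \<in> H"
  using HF unfolding good_hardy_field_def by blast

lemma H_const: "(\<lambda>_. c) \<in> H" by (rule H_le) (rule le_const)
lemma H_id: "(\<lambda>x. x) \<in> H" by (rule H_le) (rule le_ident)

lemma H_add: "f \<in> H \<Longrightarrow> g \<in> H \<Longrightarrow> (\<lambda>x. f x + g x) \<in> H"
  using HH unfolding hardy_field_def by blast
lemma H_minus: "f \<in> H \<Longrightarrow> (\<lambda>x. - f x) \<in> H"
  using HH unfolding hardy_field_def by blast
lemma H_mult: "f \<in> H \<Longrightarrow> g \<in> H \<Longrightarrow> (\<lambda>x. f x * g x) \<in> H"
  using HH unfolding hardy_field_def by blast
lemma H_diff: "f \<in> H \<Longrightarrow> g \<in> H \<Longrightarrow> (\<lambda>x. f x - g x) \<in> H"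
  using H_add[of f "\<lambda>x. - g x"] H_minus[of g] by simp
lemma H_cmult: "f \<in> H \<Longrightarrow> (\<lambda>x. c * f x) \<in> H"
  using H_mult[OF H_const] by blast

lemma H_zero_or_inv: "f \<in> H \<Longrightarrow> (\<forall>\<^sub>F x in at_top. f x = 0) \<or> (\<exists>h\<in>H. \<forall>\<^sub>F x in at_top. f x * h x = 1)"
  using HH unfolding hardy_field_def by blast

lemma H_deriv: "f \<in> H \<Longrightarrow> deriv f \<in> H"
  using HH unfolding hardy_field_def by blast

lemma H_differentiable: "f \<in> H \<Longrightarrow> \<forall>\<^sub>F x in at_top. f differentiable (at x)"
  using HH unfolding hardy_field_def by blast

lemma H_DERIV: assumes "f \<in> H" shows "\<forall>\<^sub>F x in at_top. DERIV f x :> deriv f x"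
  using H_differentiable[OF assms] by (rule eventually_mono) (simp add: DERIV_deriv_iff_real_differentiable)

lemma H_isCont: assumes "f \<in> H" shows "\<forall>\<^sub>F x in at_top. isCont f x"
  using H_DERIV[OF assms] by (rule eventually_mono) (rule DERIV_isCont)

lemma H_hderiv: "f \<in> H \<Longrightarrow> hderiv k f \<in> H"
  by (induction k) (auto simp: hderiv_Suc H_deriv)

lemma H_comp: "f \<in> H \<Longrightarrow> g \<in> H \<Longrightarrow> filterlim g at_top at_top \<Longrightarrow> (\<lambda>x. f (g x)) \<in> H"
  using HF unfolding good_hardy_field_def by blast

lemma H_inv: assumes "f \<in> H" "\<forall>\<^sub>F x in at_top. f x \<noteq> 0" shows "(\<lambda>x. 1 / f x) \<in> H"
proof -
  have "\<not> (\<forall>\<^sub>F x in at_top. f x = 0)"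
  proof
    assume "\<forall>\<^sub>F x in at_top. f x = 0"
    from eventually_conj[OF assms(2) this] have "\<forall>\<^sub>F x in at_top. False"
      by (auto elim: eventually_mono)
    then show False using eventually_False[of at_top] trivial_limit_at_top_linorder by blast
  qed
  with H_zero_or_inv[OF assms(1)] obtain h where h: "h \<in> H" "\<forall>\<^sub>F x in at_top. f x * h x = 1" by blast
  from h(2) have "\<forall>\<^sub>F x in at_top. h x = 1 / f x"
    by eventually_elim (auto simp: eq_divide_eq mult_ac)
  with h(1) show ?thesis by (rule H_ev)
qed

lemma H_divide: assumes "f \<in> H" "g \<in> H" "\<forall>\<^sub>F x in at_top. g x \<noteq> 0" shows "(\<lambda>x. f x / g x) \<in> H"
proof -
  have "(\<lambda>x. f x * (1 / g x)) \<in> H" by (rule H_mult[OF assms(1) H_inv[OF assms(2,3)]])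
  then show ?thesis by simp
qed

lemma H_powr: assumes "g \<in> H" "filterlim g at_top at_top" shows "(\<lambda>x. g x powr a) \<in> H"
proof -
  have "le_fun (\<lambda>x. exp (a * ln x))"
    by (intro le_exp le_mult le_const le_ln le_ident) (simp add: eventually_gt_at_top)
  then have "(\<lambda>x. exp (a * ln x)) \<in> H" by (rule H_le)
  from H_comp[OF this assms] have "(\<lambda>x. exp (a * ln (g x))) \<in> H" .
  moreover have "\<forall>\<^sub>F x in at_top. exp (a * ln (g x)) = g x powr a"
  proof -
    have "\<forall>\<^sub>F x in at_top. g x > 0" using assms(2) unfolding filterlim_at_top_dense by blast
    then show ?thesis by (rule eventually_mono) (simp add: powr_def)
  qed
  ultimately show ?thesis by (rule H_ev)
qed

lemma H_rpow: "(\<lambda>x. x powr a) \<in> H"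
  using H_powr[OF H_id filterlim_ident] .

lemma H_nonzero_sign:
  assumes "f \<in> H" "\<forall>\<^sub>F x in at_top. f x \<noteq> 0"
  shows "(\<forall>\<^sub>F x in at_top. f x > 0) \<or> (\<forall>\<^sub>F x in at_top. f x < 0)"
proof -
  from assms(2) H_isCont[OF assms(1)] have "\<forall>\<^sub>F x in at_top. f x \<noteq> 0 \<and> isCont f x"
    by eventually_elim auto
  then obtain a where a: "\<And>x. x \<ge> a \<Longrightarrow> f x \<noteq> 0 \<and> isCont f x"
    unfolding eventually_at_top_linorder by blast
  show ?thesis
  proof (cases "f a > 0")
    case True
    have "\<forall>x\<ge>a. f x > 0"
    proof (rule ccontr)
      assume "\<not> (\<forall>x\<ge>a. f x > 0)"
      then obtain b where b: "b \<ge> a" "f b \<le> 0" by auto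
      have c: "\<forall>x. a \<le> x \<and> x \<le> b \<longrightarrow> isCont f x" using a by auto
      obtain x where "a \<le> x" "x \<le> b" "f x = 0"
        using IVT2[of f b 0 a, OF b(2) _ b(1) c] True by auto
      with a show False by auto
    qed
    then show ?thesis unfolding eventually_at_top_linorder by blast
  next
    case False
    with a[of a] have fa: "f a < 0" by auto
    have "\<forall>x\<ge>a. f x < 0"
    proof (rule ccontr)
      assume "\<not> (\<forall>x\<ge>a. f x < 0)"
      then obtain b where b: "b \<ge> a" "f b \<ge> 0" by auto
      have c: "\<forall>x. a \<le> x \<and> x \<le> b \<longrightarrow> isCont f x" using a by auto
      obtain x where "a \<le> x" "x \<le> b" "f x = 0"
        using IVT[of f a 0 b, OF _ b(2) b(1) c] fa by auto
      with a show False by auto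
    qed
    then show ?thesis unfolding eventually_at_top_linorder by blast
  qed
qed

lemma H_sign:
  assumes "f \<in> H"
  shows "(\<forall>\<^sub>F x in at_top. f x = 0) \<or> (\<forall>\<^sub>F x in at_top. f x > 0) \<or> (\<forall>\<^sub>F x in at_top. f x < 0)"
proof -
  { assume "\<not> (\<forall>\<^sub>F x in at_top. f x = 0)"
    with H_zero_or_inv[OF assms] obtain h where "\<forall>\<^sub>F x in at_top. f x * h x = 1" by blast
    then have "\<forall>\<^sub>F x in at_top. f x \<noteq> 0" by eventually_elim auto
    from H_nonzero_sign[OF assms this] have ?thesis by blast }
  then show ?thesis by blast
qed

lemma H_abs: assumes "f \<in> H" shows "(\<lambda>x. \<bar>f x\<bar>) \<in> H"
proof -
  from H_sign[OF assms] consider "\<forall>\<^sub>F x in at_top. f x = 0" | "\<forall>\<^sub>F x in at_top. f x > 0"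
    | "\<forall>\<^sub>F x in at_top. f x < 0" by blast
  then show ?thesis
  proof cases
    case 1 then have "\<forall>\<^sub>F x in at_top. f x = \<bar>f x\<bar>" by eventually_elim auto
    then show ?thesis by (rule H_ev[OF assms])
  next
    case 2 then have "\<forall>\<^sub>F x in at_top. f x = \<bar>f x\<bar>" by eventually_elim auto
    then show ?thesis by (rule H_ev[OF assms])
  next
    case 3 then have "\<forall>\<^sub>F x in at_top. - f x = \<bar>f x\<bar>" by eventually_elim auto
    then show ?thesis by (rule H_ev[OF H_minus[OF assms]])
  qed
qed

lemma mono_lim:
  fixes f :: "real \<Rightarrow> real"
  assumes mono: "\<And>x y. a \<le> x \<Longrightarrow> x \<le> y \<Longrightarrow> f x \<le> f y"
  shows "(\<exists>c. (f \<longlongrightarrow> c) at_top) \<or> filterlim f at_top at_top"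
proof (cases "bdd_above (f ` {a..})")
  case True
  define S where "S = Sup (f ` {a..})"
  have le: "f x \<le> S" if "x \<ge> a" for x
    unfolding S_def using True that by (intro cSup_upper) auto
  have "(f \<longlongrightarrow> S) at_top"
  proof (rule order_tendstoI)
    fix y assume "y < S"
    then obtain z where "z \<in> f ` {a..}" "y < z"
      unfolding S_def using less_cSupE by blast
    then obtain x0 where x0: "x0 \<ge> a" "y < f x0" by auto
    show "\<forall>\<^sub>F x in at_top. y < f x"
      unfolding eventually_at_top_linorder
    proof (rule exI[of _ x0], intro allI impI)
      fix x assume "x0 \<le> x" then show "y < f x" using x0 mono[of x0 x] by linarith
    qed
  next
    fix y assume "S < y"
    then show "\<forall>\<^sub>F x in at_top. f x < y"
      unfolding eventually_at_top_linorder using le \<open>S < y\<close> by (intro exI[of _ a]) (meson le_less_trans)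
  qed
  then show ?thesis by blast
next
  case False
  have "filterlim f at_top at_top"
    unfolding filterlim_at_top
  proof
    fix Z
    have "\<not> (\<forall>x\<ge>a. f x \<le> Z)"
    proof
      assume "\<forall>x\<ge>a. f x \<le> Z"
      then have "bdd_above (f ` {a..})" unfolding bdd_above_def by auto
      with False show False by simp
    qed
    then obtain x0 where x0: "x0 \<ge> a" "f x0 > Z" by (auto simp: not_le)
    show "\<forall>\<^sub>F x in at_top. Z \<le> f x"
      unfolding eventually_at_top_linorder
    proof (rule exI[of _ x0], intro allI impI)
      fix x assume "x0 \<le> x" then show "Z \<le> f x" using x0 mono[of x0 x] by linarith
    qed
  qed
  then show ?thesis by blast
qed

lemma H_mono:
  assumes "f \<in> H"
  shows "\<exists>a. (\<forall>x y. a \<le> x \<longrightarrow> x \<le> y \<longrightarrow> f x \<le> f y) \<or> (\<forall>x y. a \<le> x \<longrightarrow> x \<le> y \<longrightarrow> f y \<le> f x)"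
proof -
  have D: "\<forall>\<^sub>F x in at_top. DERIV f x :> deriv f x" using H_DERIV[OF assms] .
  have "(\<forall>\<^sub>F x in at_top. deriv f x \<ge> 0) \<or> (\<forall>\<^sub>F x in at_top. deriv f x \<le> 0)"
    using H_sign[OF H_deriv[OF assms]]
  proof (elim disjE)
    assume "\<forall>\<^sub>F x in at_top. deriv f x = 0"
    then have "\<forall>\<^sub>F x in at_top. deriv f x \<ge> 0" by (rule eventually_mono) simp
    then show ?thesis by blast
  next
    assume "\<forall>\<^sub>F x in at_top. deriv f x > 0"
    then have "\<forall>\<^sub>F x in at_top. deriv f x \<ge> 0" by (rule eventually_mono) simp
    then show ?thesis by blast
  next
    assume "\<forall>\<^sub>F x in at_top. deriv f x < 0"
    then have "\<forall>\<^sub>F x in at_top. deriv f x \<le> 0" by (rule eventually_mono) simp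
    then show ?thesis by blast
  qed
  then show ?thesis
  proof
    assume "\<forall>\<^sub>F x in at_top. deriv f x \<ge> 0"
    with D have "\<forall>\<^sub>F x in at_top. DERIV f x :> deriv f x \<and> deriv f x \<ge> 0" by eventually_elim auto
    then obtain a where a: "\<And>x. x \<ge> a \<Longrightarrow> DERIV f x :> deriv f x \<and> deriv f x \<ge> 0"
      unfolding eventually_at_top_linorder by blast
    have "\<forall>x y. a \<le> x \<longrightarrow> x \<le> y \<longrightarrow> f x \<le> f y"
    proof (intro allI impI)
      fix x y assume "a \<le> x" "x \<le> y"
      show "f x \<le> f y"
      proof (rule DERIV_nonneg_imp_nondecreasing[of x y])
        show "x \<le> y" by fact
      next
        fix z assume "x \<le> z" "z \<le> y"
        with a[of z] \<open>a \<le> x\<close> show "\<exists>y. DERIV f z :> y \<and> y \<ge> 0" by auto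
      qed
    qed
    then show ?thesis by blast
  next
    assume "\<forall>\<^sub>F x in at_top. deriv f x \<le> 0"
    with D have "\<forall>\<^sub>F x in at_top. DERIV f x :> deriv f x \<and> deriv f x \<le> 0" by eventually_elim auto
    then obtain a where a: "\<And>x. x \<ge> a \<Longrightarrow> DERIV f x :> deriv f x \<and> deriv f x \<le> 0"
      unfolding eventually_at_top_linorder by blast
    have "\<forall>x y. a \<le> x \<longrightarrow> x \<le> y \<longrightarrow> f y \<le> f x"
    proof (intro allI impI)
      fix x y assume "a \<le> x" "x \<le> y"
      show "f y \<le> f x"
      proof (rule DERIV_nonpos_imp_nonincreasing[of x y])
        show "x \<le> y" by fact
      next
        fix z assume "x \<le> z" "z \<le> y"
        with a[of z] \<open>a \<le> x\<close> show "\<exists>y. DERIV f z :> y \<and> y \<le> 0" by auto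
      qed
    qed
    then show ?thesis by blast
  qed
qed

lemma H_lim:
  assumes "f \<in> H"
  shows "(\<exists>c. (f \<longlongrightarrow> c) at_top) \<or> filterlim f at_top at_top \<or> filterlim f at_bot at_top"
proof -
  from H_mono[OF assms] obtain a where
    "(\<forall>x y. a \<le> x \<longrightarrow> x \<le> y \<longrightarrow> f x \<le> f y) \<or> (\<forall>x y. a \<le> x \<longrightarrow> x \<le> y \<longrightarrow> f y \<le> f x)" by blast
  then show ?thesis
  proof
    assume "\<forall>x y. a \<le> x \<longrightarrow> x \<le> y \<longrightarrow> f x \<le> f y"
    then show ?thesis using mono_lim[of a f] by blast
  next
    assume "\<forall>x y. a \<le> x \<longrightarrow> x \<le> y \<longrightarrow> f y \<le> f x"
    then have "(\<exists>c. ((\<lambda>x. - f x) \<longlongrightarrow> c) at_top) \<or> filterlim (\<lambda>x. - f x) at_top at_top"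
      using mono_lim[of a "\<lambda>x. - f x"] by force
    then show ?thesis
    proof
      assume "\<exists>c. ((\<lambda>x. - f x) \<longlongrightarrow> c) at_top"
      then obtain c where "((\<lambda>x. - f x) \<longlongrightarrow> c) at_top" by blast
      from tendsto_minus[OF this] show ?thesis by auto
    next
      assume "filterlim (\<lambda>x. - f x) at_top at_top"
      then show ?thesis by (simp add: filterlim_uminus_at_top)
    qed
  qed
qed

end

lemma gmvt_bound:
  fixes u v u' v' :: "real \<Rightarrow> real"
  assumes a: "\<And>x. x \<ge> a \<Longrightarrow> DERIV u x :> u' x \<and> DERIV v x :> v' x \<and> v' x \<noteq> 0 \<and> M * \<bar>v' x\<bar> \<le> \<bar>u' x\<bar>"
    and ts: "a \<le> t" "t < s"
  shows "M * \<bar>v s - v t\<bar> \<le> \<bar>u s - u t\<bar>"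
proof -
  have cu: "isCont u z" if "t \<le> z" for z using a[of z] ts that by (auto intro: DERIV_isCont)
  have cv: "isCont v z" if "t \<le> z" for z using a[of z] ts that by (auto intro: DERIV_isCont)
  have "\<exists>c. t < c \<and> c < s \<and> (u s - u t) * v' c = (v s - v t) * u' c"
  proof (rule GMVT'[where f=u and g=v and f'=u' and g'=v' and a=t and b=s])
    show "t < s" by fact
    show "isCont u z" if "t \<le> z" "z \<le> s" for z using cu that by blast
    show "isCont v z" if "t \<le> z" "z \<le> s" for z using cv that by blast
    show "DERIV v z :> v' z" if "t < z" "z < s" for z using a[of z] that ts by auto
    show "DERIV u z :> u' z" if "t < z" "z < s" for z using a[of z] that ts by auto
  qed
  then obtain c where c: "t < c" "c < s" "(u s - u t) * v' c = (v s - v t) * u' c" by blast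
  from a[of c] c ts have d: "v' c \<noteq> 0" "M * \<bar>v' c\<bar> \<le> \<bar>u' c\<bar>" by auto
  have "\<bar>u s - u t\<bar> * \<bar>v' c\<bar> = \<bar>v s - v t\<bar> * \<bar>u' c\<bar>"
    using c(3) by (metis abs_mult)
  also have "\<dots> \<ge> \<bar>v s - v t\<bar> * (M * \<bar>v' c\<bar>)"
    using d(2) by (intro mult_left_mono) auto
  finally have "(M * \<bar>v s - v t\<bar>) * \<bar>v' c\<bar> \<le> \<bar>u s - u t\<bar> * \<bar>v' c\<bar>" by (simp add: mult_ac)
  then show ?thesis using d(1) by (simp add: mult_le_cancel_right)
qed

lemma lin_aux:
  fixes a1 a2 a3 a4 a5 a6 :: real
  shows "a1 \<le> a2 \<Longrightarrow> a3 \<le> a1 + a4 \<Longrightarrow> 2 * a4 + 2 * a5 \<le> a3 \<Longrightarrow> a2 \<le> a6 + a5 \<Longrightarrow> a3 \<le> 2 * a6"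
  by linarith

lemma cm_inf:
  fixes u v u' v' :: "real \<Rightarrow> real"
  assumes ev: "\<forall>\<^sub>F x in at_top. DERIV u x :> u' x \<and> DERIV v x :> v' x \<and> v' x \<noteq> 0 \<and> M * \<bar>v' x\<bar> \<le> \<bar>u' x\<bar>"
    and M: "M > 0" and vinf: "filterlim (\<lambda>x. \<bar>v x\<bar>) at_top at_top"
  shows "\<forall>\<^sub>F x in at_top. M/2 * \<bar>v x\<bar> \<le> \<bar>u x\<bar>"
proof -
  obtain a where a: "\<And>x. x \<ge> a \<Longrightarrow> DERIV u x :> u' x \<and> DERIV v x :> v' x \<and> v' x \<noteq> 0 \<and> M * \<bar>v' x\<bar> \<le> \<bar>u' x\<bar>"
    using ev unfolding eventually_at_top_linorder by blast
  have "\<forall>\<^sub>F x in at_top. \<bar>v x\<bar> \<ge> 2 * (M * \<bar>v a\<bar> + \<bar>u a\<bar>) / M"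
    using vinf unfolding filterlim_at_top by blast
  moreover have "\<forall>\<^sub>F x in at_top. x > a" by (rule eventually_gt_at_top)
  ultimately show ?thesis
  proof eventually_elim
    case (elim x)
    have k: "M * \<bar>v x - v a\<bar> \<le> \<bar>u x - u a\<bar>" by (rule gmvt_bound[OF a]) (use elim in auto)
    have t1: "\<bar>v x\<bar> \<le> \<bar>v x - v a\<bar> + \<bar>v a\<bar>" by linarith
    have t2: "M * \<bar>v x\<bar> \<le> M * \<bar>v x - v a\<bar> + M * \<bar>v a\<bar>"
      using mult_left_mono[OF t1, of M] M by (simp add: distrib_left)
    have t3: "M * \<bar>v x\<bar> \<ge> 2 * (M * \<bar>v a\<bar>) + 2 * \<bar>u a\<bar>"
      using elim(1) M by (simp add: field_simps)
    have t4: "\<bar>u x - u a\<bar> \<le> \<bar>u x\<bar> + \<bar>u a\<bar>" by linarith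
    have t5: "M/2 * \<bar>v x\<bar> = (M * \<bar>v x\<bar>)/2" by simp
    show ?case using lin_aux[OF k t2 t3 t4] by simp
  qed
qed

lemma cm_zero:
  fixes u v u' v' :: "real \<Rightarrow> real"
  assumes ev: "\<forall>\<^sub>F x in at_top. DERIV u x :> u' x \<and> DERIV v x :> v' x \<and> v' x \<noteq> 0 \<and> M * \<bar>v' x\<bar> \<le> \<bar>u' x\<bar>"
    and u0: "(u \<longlongrightarrow> 0) at_top" and v0: "(v \<longlongrightarrow> 0) at_top"
  shows "\<forall>\<^sub>F x in at_top. M * \<bar>v x\<bar> \<le> \<bar>u x\<bar>"
proof -
  obtain a where a: "\<And>x. x \<ge> a \<Longrightarrow> DERIV u x :> u' x \<and> DERIV v x :> v' x \<and> v' x \<noteq> 0 \<and> M * \<bar>v' x\<bar> \<le> \<bar>u' x\<bar>"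
    using ev unfolding eventually_at_top_linorder by blast
  have "M * \<bar>v t\<bar> \<le> \<bar>u t\<bar>" if t: "t \<ge> a" for t
  proof (rule tendsto_le[OF trivial_limit_at_top_linorder])
    show "((\<lambda>s. \<bar>u s - u t\<bar>) \<longlongrightarrow> \<bar>u t\<bar>) at_top"
      using tendsto_rabs[OF tendsto_diff[OF u0 tendsto_const[of "u t"]]] by simp
    show "((\<lambda>s. M * \<bar>v s - v t\<bar>) \<longlongrightarrow> M * \<bar>v t\<bar>) at_top"
      using tendsto_mult[OF tendsto_const[of M] tendsto_rabs[OF tendsto_diff[OF v0 tendsto_const[of "v t"]]]] by simp
    show "\<forall>\<^sub>F s in at_top. M * \<bar>v s - v t\<bar> \<le> \<bar>u s - u t\<bar>"
      using eventually_gt_at_top[of t] by (rule eventually_mono) (rule gmvt_bound[OF a t])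
  qed
  then show ?thesis unfolding eventually_at_top_linorder by blast
qed

lemma cm_both:
  fixes u v u' v' :: "real \<Rightarrow> real"
  assumes ev: "\<forall>\<^sub>F x in at_top. DERIV u x :> u' x \<and> DERIV v x :> v' x \<and> v' x \<noteq> 0 \<and> M * \<bar>v' x\<bar> \<le> \<bar>u' x\<bar>"
    and M: "M > 0"
    and reg: "filterlim (\<lambda>x. \<bar>v x\<bar>) at_top at_top \<or> ((u \<longlongrightarrow> 0) at_top \<and> (v \<longlongrightarrow> 0) at_top)"
  shows "\<forall>\<^sub>F x in at_top. M/2 * \<bar>v x\<bar> \<le> \<bar>u x\<bar>"
  using reg
proof
  assume "filterlim (\<lambda>x. \<bar>v x\<bar>) at_top at_top"
  then show ?thesis using cm_inf[OF ev M] by blast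
next
  assume "(u \<longlongrightarrow> 0) at_top \<and> (v \<longlongrightarrow> 0) at_top"
  then have "\<forall>\<^sub>F x in at_top. M * \<bar>v x\<bar> \<le> \<bar>u x\<bar>" using cm_zero[OF ev] by blast
  then show ?thesis by (rule eventually_mono) (use M in \<open>simp add: mult_right_mono order_trans[rotated]\<close>)
qed

lemma lhopital_at_top_0:
  fixes f g f' g' :: "real \<Rightarrow> real"
  assumes f0: "(f \<longlongrightarrow> 0) at_top" and g0: "(g \<longlongrightarrow> 0) at_top"
    and gnz: "\<forall>\<^sub>F x in at_top. g x \<noteq> 0" and g'nz: "\<forall>\<^sub>F x in at_top. g' x \<noteq> 0"
    and Df: "\<forall>\<^sub>F x in at_top. DERIV f x :> f' x" and Dg: "\<forall>\<^sub>F x in at_top. DERIV g x :> g' x"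
    and lim: "((\<lambda>x. f' x / g' x) \<longlongrightarrow> L) at_top"
  shows "((\<lambda>x. f x / g x) \<longlongrightarrow> L) at_top"
  unfolding filterlim_at_top_to_right
proof (rule lhopital_right_0)
  let ?F = "\<lambda>x. f (inverse x)"
  let ?G = "\<lambda>x. g (inverse x)"
  let ?D = "\<lambda>f' x. f' (inverse x) * - (inverse x ^ Suc (Suc 0))"
  show "(?F \<longlongrightarrow> 0) (at_right 0)" using f0 unfolding filterlim_at_top_to_right .
  show "(?G \<longlongrightarrow> 0) (at_right 0)" using g0 unfolding filterlim_at_top_to_right .
  show "\<forall>\<^sub>F x in at_right 0. ?G x \<noteq> 0"
    unfolding eventually_at_right_to_top using gnz by simp
  show "eventually (\<lambda>x. DERIV ?G x  :> ?D g' x) (at_right 0)"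
    unfolding eventually_at_right_to_top
    using Dg eventually_ge_at_top[where c=1]
    by eventually_elim (rule derivative_eq_intros DERIV_chain'[where f=inverse] | simp)+
  show "eventually (\<lambda>x. DERIV ?F x  :> ?D f' x) (at_right 0)"
    unfolding eventually_at_right_to_top
    using Df eventually_ge_at_top[where c=1]
    by eventually_elim (rule derivative_eq_intros DERIV_chain'[where f=inverse] | simp)+
  show "eventually (\<lambda>x. ?D g' x \<noteq> 0) (at_right 0)"
    unfolding eventually_at_right_to_top
    using g'nz eventually_ge_at_top[where c=1]
    by eventually_elim auto
  show "((\<lambda>x. ?D f' x / ?D g' x) \<longlongrightarrow> L) (at_right 0)"
    unfolding filterlim_at_right_to_top
    apply (intro filterlim_cong[THEN iffD2, OF refl refl _ lim])
    using eventually_ge_at_top[where c=1]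
    by eventually_elim simp
qed

lemma abs_at_top_of_at_bot:
  fixes f :: "real \<Rightarrow> real"
  assumes "filterlim f at_bot at_top" shows "filterlim (\<lambda>x. \<bar>f x\<bar>) at_top at_top"
  unfolding filterlim_at_top
proof
  fix Z :: real
  have "\<forall>\<^sub>F x in at_top. f x \<le> - \<bar>Z\<bar>" using assms unfolding filterlim_at_bot by blast
  then show "\<forall>\<^sub>F x in at_top. Z \<le> \<bar>f x\<bar>" by (rule eventually_mono) linarith
qed

lemma abs_at_top_of_at_top:
  fixes f :: "real \<Rightarrow> real"
  assumes "filterlim f at_top at_top" shows "filterlim (\<lambda>x. \<bar>f x\<bar>) at_top at_top"
  unfolding filterlim_at_top
proof
  fix Z :: real
  have "\<forall>\<^sub>F x in at_top. f x \<ge> \<bar>Z\<bar>" using assms unfolding filterlim_at_top by blast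
  then show "\<forall>\<^sub>F x in at_top. Z \<le> \<bar>f x\<bar>" by (rule eventually_mono) linarith
qed

lemma lless_tendsto0:
  assumes "lless u v" "(v \<longlongrightarrow> 0) at_top" shows "(u \<longlongrightarrow> 0) at_top"
proof -
  from assms(1) obtain C where C: "\<forall>\<^sub>F t in at_top. \<bar>u t\<bar> \<le> C * \<bar>v t\<bar>" unfolding lless_def by blast
  have lim: "((\<lambda>t. \<bar>C\<bar> * \<bar>v t\<bar>) \<longlongrightarrow> \<bar>C\<bar> * 0) at_top"
    by (intro tendsto_mult tendsto_const) (use tendsto_rabs[OF assms(2)] in simp)
  show ?thesis
  proof (rule Lim_null_comparison)
    show "\<forall>\<^sub>F t in at_top. norm (u t) \<le> \<bar>C\<bar> * \<bar>v t\<bar>"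
      using C
    proof (rule eventually_mono)
      fix t assume "\<bar>u t\<bar> \<le> C * \<bar>v t\<bar>"
      moreover have "C * \<bar>v t\<bar> \<le> \<bar>C\<bar> * \<bar>v t\<bar>" by (intro mult_right_mono) auto
      ultimately show "norm (u t) \<le> \<bar>C\<bar> * \<bar>v t\<bar>" by simp
    qed
    show "((\<lambda>t. \<bar>C\<bar> * \<bar>v t\<bar>) \<longlongrightarrow> 0) at_top" using lim by simp
  qed
qed

lemma sprec_small:
  assumes "sprec u v" "e > 0" "\<forall>\<^sub>F x in at_top. v x \<noteq> 0"
  shows "\<forall>\<^sub>F t in at_top. \<bar>u t\<bar> < e * \<bar>v t\<bar>"
proof -
  have "((\<lambda>t. \<bar>u t / v t\<bar>) \<longlongrightarrow> 0) at_top"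
    using tendsto_rabs[OF assms(1)[unfolded sprec_def]] by simp
  from order_tendstoD(2)[OF this assms(2)] assms(3) show ?thesis
    by eventually_elim (simp add: abs_divide divide_less_eq)
qed

lemma sprec_lless:
  assumes "sprec u v" "\<forall>\<^sub>F x in at_top. v x \<noteq> 0" shows "lless u v"
proof -
  from sprec_small[OF assms(1) _ assms(2), of 1] have "\<forall>\<^sub>F t in at_top. \<bar>u t\<bar> \<le> 1 * \<bar>v t\<bar>"
    by (auto elim: eventually_mono)
  then show ?thesis unfolding lless_def by blast
qed

lemma ev_contra:
  assumes "eventually P (at_top :: real filter)" "\<And>x. P x \<Longrightarrow> False" shows False
proof -
  have "eventually (\<lambda>x. False) (at_top :: real filter)" using assms(1) by (rule eventually_mono) (rule assms(2))
  then show False using eventually_False[of "at_top :: real filter"] trivial_limit_at_top_linorder by blast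
qed

lemma sprec_no_lower:
  assumes "sprec u v" "\<forall>\<^sub>F x in at_top. v x \<noteq> 0" "M > 0" "\<forall>\<^sub>F x in at_top. M * \<bar>v x\<bar> \<le> \<bar>u x\<bar>"
  shows False
proof -
  show False using eventually_conj[OF sprec_small[OF assms(1) assms(3) assms(2)] assms(4)]
    by (rule ev_contra) linarith
qed

context
  fixes H :: "(real \<Rightarrow> real) set"
  assumes HF: "good_hardy_field H"
begin

lemma H_lim_abs:
  assumes "f \<in> H"
  shows "(\<exists>c. (f \<longlongrightarrow> c) at_top) \<or> filterlim (\<lambda>x. \<bar>f x\<bar>) at_top at_top"
proof -
  from H_lim[OF HF assms] consider "\<exists>c. (f \<longlongrightarrow> c) at_top" | "filterlim f at_top at_top"
    | "filterlim f at_bot at_top" by blast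
  then show ?thesis
  proof cases
    case 1 then show ?thesis by blast
  next
    case 2 then show ?thesis using abs_at_top_of_at_top by blast
  next
    case 3 then show ?thesis using abs_at_top_of_at_bot by blast
  qed
qed

lemma ratio_trich:
  assumes "u \<in> H" "v \<in> H" "\<forall>\<^sub>F x in at_top. v x \<noteq> 0"
  shows "sprec u v \<or> wprec v u"
proof -
  have r: "(\<lambda>x. u x / v x) \<in> H" by (rule H_divide[OF HF assms])
  from H_lim_abs[OF r] show ?thesis
  proof
    assume "\<exists>c. ((\<lambda>x. u x / v x) \<longlongrightarrow> c) at_top"
    then obtain c where c: "((\<lambda>x. u x / v x) \<longlongrightarrow> c) at_top" by blast
    show ?thesis
    proof (cases "c = 0")
      case True then show ?thesis using c unfolding sprec_def by simp
    next
      case False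
      then have "\<exists>L>0. ((\<lambda>t. \<bar>u t / v t\<bar>) \<longlongrightarrow> L) at_top"
        by (intro exI[of _ "\<bar>c\<bar>"]) (use tendsto_rabs[OF c] in simp)
      then show ?thesis unfolding wprec_def by blast
    qed
  next
    assume "filterlim (\<lambda>x. \<bar>u x / v x\<bar>) at_top at_top"
    then show ?thesis unfolding wprec_def by blast
  qed
qed

lemma up_core:
  assumes u: "u \<in> H" and v: "v \<in> H" and vnz: "\<forall>\<^sub>F x in at_top. v x \<noteq> 0"
    and dvnz: "\<forall>\<^sub>F x in at_top. deriv v x \<noteq> 0"
    and reg: "filterlim (\<lambda>x. \<bar>v x\<bar>) at_top at_top \<or> (v \<longlongrightarrow> 0) at_top"
    and ll: "lless u v" and M: "M > 0"
    and low: "\<forall>\<^sub>F x in at_top. M * \<bar>deriv v x\<bar> \<le> \<bar>deriv u x\<bar>"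
  shows "\<forall>\<^sub>F x in at_top. M/2 * \<bar>v x\<bar> \<le> \<bar>u x\<bar>"
proof (rule cm_both[where u'="deriv u" and v'="deriv v"])
  show "\<forall>\<^sub>F x in at_top. DERIV u x :> deriv u x \<and> DERIV v x :> deriv v x \<and> deriv v x \<noteq> 0 \<and> M * \<bar>deriv v x\<bar> \<le> \<bar>deriv u x\<bar>"
    using H_DERIV[OF HF u] H_DERIV[OF HF v] dvnz low by eventually_elim auto
  show "M > 0" by fact
  show "filterlim (\<lambda>x. \<bar>v x\<bar>) at_top at_top \<or> (u \<longlongrightarrow> 0) at_top \<and> (v \<longlongrightarrow> 0) at_top"
    using reg lless_tendsto0[OF ll] by blast
qed

lemma up_lless:
  assumes u: "u \<in> H" and v: "v \<in> H" and vnz: "\<forall>\<^sub>F x in at_top. v x \<noteq> 0"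
    and dvnz: "\<forall>\<^sub>F x in at_top. deriv v x \<noteq> 0"
    and reg: "filterlim (\<lambda>x. \<bar>v x\<bar>) at_top at_top \<or> (v \<longlongrightarrow> 0) at_top"
    and ll: "lless u v"
  shows "lless (deriv u) (deriv v)"
proof -
  have r: "(\<lambda>x. deriv u x / deriv v x) \<in> H"
    by (rule H_divide[OF HF H_deriv[OF HF u] H_deriv[OF HF v] dvnz])
  from ll obtain C where C: "\<forall>\<^sub>F t in at_top. \<bar>u t\<bar> \<le> C * \<bar>v t\<bar>" unfolding lless_def by blast
  from H_lim_abs[OF r] show ?thesis
  proof
    assume "\<exists>c. ((\<lambda>x. deriv u x / deriv v x) \<longlongrightarrow> c) at_top"
    then obtain c where c: "((\<lambda>x. deriv u x / deriv v x) \<longlongrightarrow> c) at_top" by blast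
    have "\<forall>\<^sub>F x in at_top. \<bar>deriv u x / deriv v x\<bar> < \<bar>c\<bar> + 1"
      using order_tendstoD(2)[OF tendsto_rabs[OF c]] by simp
    with dvnz have "\<forall>\<^sub>F x in at_top. \<bar>deriv u x\<bar> \<le> (\<bar>c\<bar> + 1) * \<bar>deriv v x\<bar>"
      by eventually_elim (simp add: abs_divide divide_less_eq)
    then show ?thesis unfolding lless_def by blast
  next
    assume inf: "filterlim (\<lambda>x. \<bar>deriv u x / deriv v x\<bar>) at_top at_top"
    define M where "M = 2 * (\<bar>C\<bar> + 1)"
    have M: "M > 0" unfolding M_def by simp
    have "\<forall>\<^sub>F x in at_top. \<bar>deriv u x / deriv v x\<bar> \<ge> M" using inf unfolding filterlim_at_top by blast
    with dvnz have "\<forall>\<^sub>F x in at_top. M * \<bar>deriv v x\<bar> \<le> \<bar>deriv u x\<bar>"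
      by eventually_elim (simp add: abs_divide le_divide_eq)
    from up_core[OF u v vnz dvnz reg ll M this] have "\<forall>\<^sub>F x in at_top. M/2 * \<bar>v x\<bar> \<le> \<bar>u x\<bar>" .
    with C vnz have "\<forall>\<^sub>F x in at_top. \<bar>u x\<bar> \<le> C * \<bar>v x\<bar> \<and> v x \<noteq> 0 \<and> M/2 * \<bar>v x\<bar> \<le> \<bar>u x\<bar>"
      by eventually_elim auto
    then have False
    proof (rule ev_contra)
      fix x assume elim: "\<bar>u x\<bar> \<le> C * \<bar>v x\<bar> \<and> v x \<noteq> 0 \<and> M/2 * \<bar>v x\<bar> \<le> \<bar>u x\<bar>"
      have hM: "M / 2 = \<bar>C\<bar> + 1" unfolding M_def by simp
      from elim have e1: "\<bar>u x\<bar> \<le> C * \<bar>v x\<bar>" and e2: "v x \<noteq> 0" and e3: "(\<bar>C\<bar> + 1) * \<bar>v x\<bar> \<le> \<bar>u x\<bar>"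
        unfolding hM by auto
      have "C * \<bar>v x\<bar> \<le> \<bar>C\<bar> * \<bar>v x\<bar>" by (simp add: mult_right_mono)
      moreover have "(\<bar>C\<bar> + 1) * \<bar>v x\<bar> = \<bar>C\<bar> * \<bar>v x\<bar> + \<bar>v x\<bar>" by (simp add: distrib_right)
      moreover have "\<bar>v x\<bar> > 0" using e2 by simp
      ultimately show False using e1 e3 by linarith
    qed
    then show ?thesis by simp
  qed
qed

lemma up_sprec:
  assumes u: "u \<in> H" and v: "v \<in> H" and vnz: "\<forall>\<^sub>F x in at_top. v x \<noteq> 0"
    and dvnz: "\<forall>\<^sub>F x in at_top. deriv v x \<noteq> 0"
    and reg: "filterlim (\<lambda>x. \<bar>v x\<bar>) at_top at_top \<or> (v \<longlongrightarrow> 0) at_top"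
    and sp: "sprec u v"
  shows "sprec (deriv u) (deriv v)"
proof -
  have ll: "lless u v" by (rule sprec_lless[OF sp vnz])
  have r: "(\<lambda>x. deriv u x / deriv v x) \<in> H"
    by (rule H_divide[OF HF H_deriv[OF HF u] H_deriv[OF HF v] dvnz])
  have contra: False if M: "M > 0" and low: "\<forall>\<^sub>F x in at_top. M * \<bar>deriv v x\<bar> \<le> \<bar>deriv u x\<bar>" for M
  proof -
    from up_core[OF u v vnz dvnz reg ll M low] have "\<forall>\<^sub>F x in at_top. M/2 * \<bar>v x\<bar> \<le> \<bar>u x\<bar>" .
    from sprec_no_lower[OF sp vnz _ this] M show False by simp
  qed
  from H_lim_abs[OF r] show ?thesis
  proof
    assume "\<exists>c. ((\<lambda>x. deriv u x / deriv v x) \<longlongrightarrow> c) at_top"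
    then obtain c where c: "((\<lambda>x. deriv u x / deriv v x) \<longlongrightarrow> c) at_top" by blast
    show ?thesis
    proof (cases "c = 0")
      case True then show ?thesis using c unfolding sprec_def by simp
    next
      case False
      have "\<bar>c\<bar>/2 < \<bar>c\<bar>" using False by simp
      from order_tendstoD(1)[OF tendsto_rabs[OF c] this]
      have "\<forall>\<^sub>F x in at_top. \<bar>deriv u x / deriv v x\<bar> > \<bar>c\<bar>/2" .
      with dvnz have "\<forall>\<^sub>F x in at_top. \<bar>c\<bar>/2 * \<bar>deriv v x\<bar> \<le> \<bar>deriv u x\<bar>"
        by eventually_elim (simp add: abs_divide less_divide_eq)
      from contra[OF _ this] False show ?thesis by simp
    qed
  next
    assume inf: "filterlim (\<lambda>x. \<bar>deriv u x / deriv v x\<bar>) at_top at_top"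
    have "\<forall>\<^sub>F x in at_top. \<bar>deriv u x / deriv v x\<bar> \<ge> 1" using inf unfolding filterlim_at_top by blast
    with dvnz have "\<forall>\<^sub>F x in at_top. 1 * \<bar>deriv v x\<bar> \<le> \<bar>deriv u x\<bar>"
      by eventually_elim (simp add: abs_divide le_divide_eq)
    from contra[OF _ this] show ?thesis by simp
  qed
qed

end

definition pc :: "real \<Rightarrow> nat \<Rightarrow> real" where "pc a j = (\<Prod>i<j. (a - real i))"

lemma pc_Suc: "pc a (Suc j) = pc a j * (a - real j)"
  by (simp add: pc_def)

lemma pc_nz: "(\<And>i::nat. a \<noteq> real i) \<Longrightarrow> pc a j \<noteq> 0"
  by (simp add: pc_def)

lemma hderiv_powr: "t > 0 \<Longrightarrow> hderiv j (\<lambda>t. t powr a) t = pc a j * t powr (a - real j)"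
proof (induction j arbitrary: t)
  case 0 then show ?case by (simp add: pc_def)
next
  case (Suc j)
  have D: "((\<lambda>s. pc a j * s powr (a - real j)) has_real_derivative pc a j * ((a - real j) * t powr (a - real j - 1))) (at t)"
    by (intro DERIV_cmult has_real_derivative_powr Suc.prems)
  have D2: "(hderiv j (\<lambda>t. t powr a) has_real_derivative pc a j * ((a - real j) * t powr (a - real j - 1))) (at t)"
    by (rule has_field_derivative_transform_within_open[OF D, of "{0<..}"]) (use Suc in auto)
  have "hderiv (Suc j) (\<lambda>t. t powr a) t = pc a j * ((a - real j) * t powr (a - real j - 1))"
    unfolding hderiv_Suc by (rule DERIV_imp_deriv[OF D2])
  also have "\<dots> = pc a (Suc j) * t powr (a - real (Suc j))"
    by (simp add: pc_Suc algebra_simps)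
  finally show ?case .
qed

lemma powr_at_top_real:
  fixes b :: real assumes "b > 0" shows "filterlim (\<lambda>t. t powr b) at_top at_top"
  unfolding filterlim_at_top
proof
  fix Z :: real
  show "\<forall>\<^sub>F t in at_top. Z \<le> t powr b"
    using eventually_ge_at_top[of "max 1 (\<bar>Z\<bar> powr (1/b))"]
  proof (rule eventually_mono)
    fix t assume t: "max 1 (\<bar>Z\<bar> powr (1/b)) \<le> t"
    have "Z \<le> \<bar>Z\<bar>" by simp
    also have "\<bar>Z\<bar> = (\<bar>Z\<bar> powr (1/b)) powr b"
      using assms by (simp add: powr_powr)
    also have "\<dots> \<le> t powr b"
      using t assms by (intro powr_mono2) auto
    finally show "Z \<le> t powr b" .
  qed
qed

lemma powr_tendsto_zero_real:
  fixes b :: real assumes "b < 0" shows "((\<lambda>t. t powr b) \<longlongrightarrow> 0) at_top"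
  by (rule tendsto_neg_powr[OF assms filterlim_ident])

lemma lless_inf:
  assumes "lless p q" "filterlim (\<lambda>x. \<bar>p x\<bar>) at_top at_top"
  shows "filterlim (\<lambda>x. \<bar>q x\<bar>) at_top at_top"
  unfolding filterlim_at_top
proof
  fix Z :: real
  from assms(1) obtain C where C: "\<forall>\<^sub>F t in at_top. \<bar>p t\<bar> \<le> C * \<bar>q t\<bar>" unfolding lless_def by blast
  have "\<forall>\<^sub>F t in at_top. (\<bar>C\<bar> + 1) * Z \<le> \<bar>p t\<bar>" using assms(2) unfolding filterlim_at_top by blast
  with C show "\<forall>\<^sub>F t in at_top. Z \<le> \<bar>q t\<bar>"
  proof eventually_elim
    case (elim t)
    have "C * \<bar>q t\<bar> \<le> (\<bar>C\<bar> + 1) * \<bar>q t\<bar>" by (intro mult_right_mono) auto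
    with elim have "(\<bar>C\<bar> + 1) * Z \<le> (\<bar>C\<bar> + 1) * \<bar>q t\<bar>" by linarith
    then show ?case by (simp add: mult_le_cancel_left_pos add_pos_nonneg)
  qed
qed

lemma lless_trans:
  assumes "lless p q" "lless q r" shows "lless p r"
proof -
  from assms(1) obtain C where C: "\<forall>\<^sub>F t in at_top. \<bar>p t\<bar> \<le> C * \<bar>q t\<bar>" unfolding lless_def by blast
  from assms(2) obtain D where D: "\<forall>\<^sub>F t in at_top. \<bar>q t\<bar> \<le> D * \<bar>r t\<bar>" unfolding lless_def by blast
  from C D have "\<forall>\<^sub>F t in at_top. \<bar>p t\<bar> \<le> (\<bar>C\<bar> * \<bar>D\<bar>) * \<bar>r t\<bar>"
  proof eventually_elim
    case (elim t)
    have "\<bar>p t\<bar> \<le> \<bar>C\<bar> * \<bar>q t\<bar>" using elim(1) by (smt (verit) mult_right_mono abs_ge_self abs_ge_zero)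
    also have "\<dots> \<le> \<bar>C\<bar> * (\<bar>D\<bar> * \<bar>r t\<bar>)"
      using elim(2) by (intro mult_left_mono) (auto intro: order_trans[OF _ mult_right_mono[of D "\<bar>D\<bar>"]])
    finally show ?case by (simp add: mult_ac)
  qed
  then show ?thesis unfolding lless_def by blast
qed

lemma powr_hderiv_ev:
  "\<forall>\<^sub>F t in at_top. hderiv j (\<lambda>t. t powr a) t = pc a j * t powr (a - real j)"
  using eventually_gt_at_top[of 0] by (rule eventually_mono) (rule hderiv_powr)

lemma powr_reg:
  assumes a: "\<And>i::nat. a \<noteq> real i"
  shows "(\<forall>\<^sub>F t in at_top. hderiv j (\<lambda>t. t powr a) t \<noteq> 0) \<and>
    ((hderiv j (\<lambda>t. t powr a) \<longlongrightarrow> 0) at_top \<or> filterlim (\<lambda>t. \<bar>hderiv j (\<lambda>t. t powr a) t\<bar>) at_top at_top)"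
proof
  have pc: "pc a j \<noteq> 0" by (rule pc_nz[OF a])
  show "\<forall>\<^sub>F t in at_top. hderiv j (\<lambda>t. t powr a) t \<noteq> 0"
    using eventually_conj[OF powr_hderiv_ev[of j a] eventually_gt_at_top[of 0]]
    by (rule eventually_mono) (use pc in auto)
  have aj: "a - real j \<noteq> 0" using a[of j] by simp
  show "(hderiv j (\<lambda>t. t powr a) \<longlongrightarrow> 0) at_top \<or> filterlim (\<lambda>t. \<bar>hderiv j (\<lambda>t. t powr a) t\<bar>) at_top at_top"
  proof (cases "a - real j < 0")
    case True
    have "((\<lambda>t. pc a j * t powr (a - real j)) \<longlongrightarrow> pc a j * 0) at_top"
      by (intro tendsto_mult tendsto_const powr_tendsto_zero_real True)
    then have "((\<lambda>t. pc a j * t powr (a - real j)) \<longlongrightarrow> 0) at_top" by simp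
    then have "(hderiv j (\<lambda>t. t powr a) \<longlongrightarrow> 0) at_top"
      by (rule Lim_transform_eventually) (use powr_hderiv_ev[of j a] in \<open>auto elim: eventually_mono\<close>)
    then show ?thesis by blast
  next
    case False
    with aj have pos: "a - real j > 0" by simp
    have "filterlim (\<lambda>t. \<bar>pc a j\<bar> * t powr (a - real j)) at_top at_top"
      by (rule filterlim_tendsto_pos_mult_at_top[OF tendsto_const _ powr_at_top_real[OF pos]]) (use pc in simp)
    moreover have "\<forall>\<^sub>F t in at_top. \<bar>pc a j\<bar> * t powr (a - real j) = \<bar>hderiv j (\<lambda>t. t powr a) t\<bar>"
      using eventually_conj[OF powr_hderiv_ev[of j a] eventually_gt_at_top[of 0]]
      by (rule eventually_mono) (auto simp: abs_mult)
    ultimately have "filterlim (\<lambda>t. \<bar>hderiv j (\<lambda>t. t powr a) t\<bar>) at_top at_top"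
      by (rule filterlim_cong[THEN iffD1, OF refl refl, rotated])
    then show ?thesis by blast
  qed
qed

context
  fixes H :: "(real \<Rightarrow> real) set"
  assumes HF: "good_hardy_field H"
begin

lemma L1gen:
  assumes p: "p \<in> H" and v: "v \<in> H"
    and reg: "\<And>j. (\<forall>\<^sub>F t in at_top. hderiv j v t \<noteq> 0) \<and>
       ((hderiv j v \<longlongrightarrow> 0) at_top \<or> filterlim (\<lambda>t. \<bar>hderiv j v t\<bar>) at_top at_top)"
    and ll: "lless p v"
  shows "lless (hderiv k p) (hderiv k v)"
proof (induction k)
  case 0 then show ?case using ll by simp
next
  case (Suc k)
  have "\<forall>\<^sub>F t in at_top. deriv (hderiv k v) t \<noteq> 0" using reg[of "Suc k"] by (simp add: hderiv_Suc)
  moreover have r: "filterlim (\<lambda>t. \<bar>hderiv k v t\<bar>) at_top at_top \<or> (hderiv k v \<longlongrightarrow> 0) at_top"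
    using reg[of k] by blast
  ultimately have "lless (deriv (hderiv k p)) (deriv (hderiv k v))"
    by (rule up_lless[OF HF H_hderiv[OF HF p] H_hderiv[OF HF v] conjunct1[OF reg[of k]] _ _ Suc])
  then show ?case by (simp add: hderiv_Suc)
qed

end

lemma L2_pointwise:
  fixes X Y t B c e :: real and k :: nat
  assumes X: "X > 0" and Y: "Y > 0" and t: "t > 0" and k: "k > 0"
    and der: "\<bar>t * Y\<bar> \<le> B * X" and c: "c > 0" and low: "c * t powr (e - real k) \<le> X"
  shows "(X powr (- 1 / real k) / Y powr (- 1 / real (Suc k))) powr (real k * real (Suc k))
           \<le> (\<bar>B\<bar> ^ k / c) * t powr (- e)"
proof -
  have kk: "real k \<noteq> 0" using k by simp
  have e1: "(- 1 / real k) * (real k * real (Suc k)) = - real (Suc k)" using kk by (simp add: field_simps)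
  have e2: "(- 1 / real (Suc k)) * (real k * real (Suc k)) = - real k" by (simp add: field_simps)
  have "(X powr (- 1 / real k) / Y powr (- 1 / real (Suc k))) powr (real k * real (Suc k))
      = (X powr (- 1 / real k)) powr (real k * real (Suc k)) / (Y powr (- 1 / real (Suc k))) powr (real k * real (Suc k))"
    by (rule powr_divide)
  also have "\<dots> = X powr (- real (Suc k)) / Y powr (- real k)"
    by (simp only: powr_powr e1 e2)
  also have "\<dots> = Y ^ k / X ^ Suc k"
    by (simp only: powr_minus_divide powr_realpow[OF X] powr_realpow[OF Y]) (simp add: field_simps)
  finally have eq: "(X powr (- 1 / real k) / Y powr (- 1 / real (Suc k))) powr (real k * real (Suc k)) = Y ^ k / X ^ Suc k" .
  have Yb: "Y \<le> \<bar>B\<bar> * X / t"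
  proof -
    have "t * Y \<le> \<bar>B\<bar> * X" using der X t Y by (smt (verit) abs_of_pos mult_pos_pos mult_right_mono abs_ge_self)
    then show ?thesis using t by (simp add: field_simps)
  qed
  have "Y ^ k \<le> (\<bar>B\<bar> * X / t) ^ k" by (rule power_mono[OF Yb]) (use Y in simp)
  then have "Y ^ k / X ^ Suc k \<le> (\<bar>B\<bar> * X / t) ^ k / X ^ Suc k"
    by (rule divide_right_mono) (use X in simp)
  also have "\<dots> = \<bar>B\<bar> ^ k / (t ^ k * X)"
    using X t by (simp add: power_mult_distrib power_divide field_simps)
  also have "\<dots> \<le> \<bar>B\<bar> ^ k / (t ^ k * (c * t powr (e - real k)))"
  proof (rule divide_left_mono)
    show "t ^ k * (c * t powr (e - real k)) \<le> t ^ k * X" using low t by (intro mult_left_mono) auto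
    show "0 < t ^ k * X * (t ^ k * (c * t powr (e - real k)))" using X t c by (intro mult_pos_pos) auto
  qed simp
  also have "t ^ k * (c * t powr (e - real k)) = c * t powr e"
  proof -
    have "t ^ k * t powr (e - real k) = t powr (real k) * t powr (e - real k)" using t by (simp add: powr_realpow)
    also have "\<dots> = t powr e" by (simp add: powr_add[symmetric])
    finally show ?thesis by (simp add: mult_ac)
  qed
  also have "\<bar>B\<bar> ^ k / (c * t powr e) = (\<bar>B\<bar> ^ k / c) * t powr (- e)"
    by (simp add: powr_minus_divide)
  finally show ?thesis using eq by simp
qed

context
  fixes H :: "(real \<Rightarrow> real) set"
  assumes HF: "good_hardy_field H"
begin

context
  fixes f :: "real \<Rightarrow> real" and \<delta> :: real
  assumes fH: "f \<in> H" and snp: "strongly_nonpoly f" and \<delta>: "\<delta> > 0"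
    and ll: "lless (\<lambda>t. t powr \<delta>) f"
begin

lemma f_abs_inf: "filterlim (\<lambda>t. \<bar>f t\<bar>) at_top at_top"
  by (rule lless_inf[OF ll abs_at_top_of_at_top[OF powr_at_top_real[OF \<delta>]]])

lemma NC:
  assumes lim0: "(hderiv m f \<longlongrightarrow> c) at_top" shows "c = 0"
proof (rule ccontr)
  assume c: "c \<noteq> 0"
  have D: "i \<le> m \<Longrightarrow> ((\<lambda>t. hderiv (m - i) f t / t ^ i) \<longlongrightarrow> c / fact i) at_top" for i
  proof (induction i)
    case 0 then show ?case using lim0 by simp
  next
    case (Suc i)
    then have IH: "((\<lambda>t. hderiv (m - i) f t / t ^ i) \<longlongrightarrow> c / fact i) at_top" by simp
    have mi: "m - i = Suc (m - Suc i)" using Suc.prems by simp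
    have L: "((\<lambda>t. hderiv (m - Suc i) f t / t ^ Suc i) \<longlongrightarrow> c / fact i / real (Suc i)) at_top"
    proof (rule lhospital_at_top_at_top[where f' = "hderiv (m - i) f" and g' = "\<lambda>t. real (Suc i) * t ^ i"])
      show "filterlim (\<lambda>t::real. t ^ Suc i) at_top at_top"
        by (rule filterlim_pow_at_top[OF _ filterlim_ident]) simp
      show "\<forall>\<^sub>F t in at_top. real (Suc i) * t ^ i \<noteq> 0"
        using eventually_gt_at_top[of 0] by (rule eventually_mono) simp
      show "\<forall>\<^sub>F t in at_top. DERIV (hderiv (m - Suc i) f) t :> hderiv (m - i) f t"
        using H_DERIV[OF HF H_hderiv[OF HF fH, of "m - Suc i"]] by (simp add: mi hderiv_Suc)
      show "\<forall>\<^sub>F t in at_top. DERIV (\<lambda>t. t ^ Suc i) t :> real (Suc i) * t ^ i"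
        using DERIV_pow[of "Suc i"] by simp
      have eq: "hderiv (m - i) f t / (real (Suc i) * t ^ i) = hderiv (m - i) f t / t ^ i / real (Suc i)" for t
        by (simp add: divide_divide_eq_left mult.commute)
      show "((\<lambda>t. hderiv (m - i) f t / (real (Suc i) * t ^ i)) \<longlongrightarrow> c / fact i / real (Suc i)) at_top"
        unfolding eq by (intro tendsto_divide IH tendsto_const) simp
    qed
    have eq2: "c / fact i / real (Suc i) = c / fact (Suc i)"
      by (simp add: divide_divide_eq_left mult.commute)
    show ?case using L by (simp only: eq2)
  qed
  from D[of m] have lim: "((\<lambda>t. f t / t ^ m) \<longlongrightarrow> c / fact m) at_top" by simp
  define c' where "c' = c / fact m"
  have c': "c' \<noteq> 0" using c by (simp add: c'_def)
  from snp obtain d where d1: "sprec (\<lambda>t. t ^ d) f" and d2: "sprec f (\<lambda>t. t ^ (d + 1))"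
    unfolding strongly_nonpoly_def by blast
  show False
  proof (cases "m \<le> d")
    case True
    have "((\<lambda>t. t ^ m / f t) \<longlongrightarrow> 0) at_top"
    proof (rule Lim_null_comparison)
      show "\<forall>\<^sub>F t in at_top. norm (t ^ m / f t) \<le> \<bar>t ^ d / f t\<bar>"
        using eventually_ge_at_top[of 1]
      proof (rule eventually_mono)
        fix t :: real assume t: "1 \<le> t"
        have "t ^ m \<le> t ^ d" by (rule power_increasing[OF True t])
        then show "norm (t ^ m / f t) \<le> \<bar>t ^ d / f t\<bar>"
          using t by (simp add: abs_divide divide_right_mono)
      qed
      show "((\<lambda>t. \<bar>t ^ d / f t\<bar>) \<longlongrightarrow> 0) at_top"
        using tendsto_rabs[OF d1[unfolded sprec_def]] by simp
    qed
    moreover have "((\<lambda>t. t ^ m / f t) \<longlongrightarrow> inverse c') at_top"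
      using tendsto_inverse[OF lim[folded c'_def] c'] by simp
    ultimately have "inverse c' = 0" using tendsto_unique[OF trivial_limit_at_top_linorder] by blast
    with c' show False by simp
  next
    case False
    have "((\<lambda>t. f t / t ^ m) \<longlongrightarrow> 0) at_top"
    proof (rule Lim_null_comparison)
      show "\<forall>\<^sub>F t in at_top. norm (f t / t ^ m) \<le> \<bar>f t / t ^ (d + 1)\<bar>"
        using eventually_ge_at_top[of 1]
      proof (rule eventually_mono)
        fix t :: real assume t: "1 \<le> t"
        have le: "t ^ (d + 1) \<le> t ^ m" by (rule power_increasing) (use False t in auto)
        have pos: "0 < t ^ (d + 1)" using t by simp
        have "\<bar>f t\<bar> / t ^ m \<le> \<bar>f t\<bar> / t ^ (d + 1)"
          by (rule divide_left_mono[OF le]) (use pos le in auto)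
        then show "norm (f t / t ^ m) \<le> \<bar>f t / t ^ (d + 1)\<bar>"
          using t by (simp add: abs_divide)
      qed
      show "((\<lambda>t. \<bar>f t / t ^ (d + 1)\<bar>) \<longlongrightarrow> 0) at_top"
        using tendsto_rabs[OF d2[unfolded sprec_def]] by simp
    qed
    then have "c' = 0" using lim[folded c'_def] tendsto_unique[OF trivial_limit_at_top_linorder] by blast
    with c' show False by simp
  qed
qed

lemma NEC: "\<not> (\<exists>c. \<forall>\<^sub>F t in at_top. hderiv j f t = c)"
proof (induction j)
  case 0
  show ?case
  proof
    assume "\<exists>c. \<forall>\<^sub>F t in at_top. hderiv 0 f t = c"
    then obtain c where c: "\<forall>\<^sub>F t in at_top. f t = c" by auto
    have c2: "\<forall>\<^sub>F t in at_top. \<bar>c\<bar> + 1 \<le> \<bar>f t\<bar>" using f_abs_inf unfolding filterlim_at_top by blast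
    show False using eventually_conj[OF c c2] by (rule ev_contra) auto
  qed
next
  case (Suc j)
  show ?case
  proof
    assume "\<exists>c. \<forall>\<^sub>F t in at_top. hderiv (Suc j) f t = c"
    then obtain c where c: "\<forall>\<^sub>F t in at_top. hderiv (Suc j) f t = c" by blast
    show False
    proof (cases "c = 0")
      case False
      have "(hderiv (Suc j) f \<longlongrightarrow> c) at_top"
        by (rule Lim_transform_eventually[OF tendsto_const]) (use c in \<open>auto elim: eventually_mono\<close>)
      from NC[OF this] False show False by simp
    next
      case True
      let ?h = "hderiv j f"
      have "\<forall>\<^sub>F t in at_top. DERIV ?h t :> 0"
        using H_DERIV[OF HF H_hderiv[OF HF fH, of j]] c
        by eventually_elim (simp add: hderiv_Suc True)
      then obtain a where a: "\<And>t. t \<ge> a \<Longrightarrow> DERIV ?h t :> 0"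
        unfolding eventually_at_top_linorder by blast
      have "?h t = ?h a" if t: "t \<ge> a" for t
      proof (cases "t = a")
        case False
        with t have at: "a < t" by simp
        show ?thesis
        proof (rule DERIV_isconst_end[OF at])
          show "continuous_on {a..t} ?h"
          proof (rule continuous_at_imp_continuous_on, intro ballI)
            fix x assume "x \<in> {a..t}"
            then have "DERIV ?h x :> 0" using a by auto
            then show "isCont ?h x" by (rule DERIV_isCont)
          qed
          show "DERIV ?h x :> 0" if "a < x" "x < t" for x using a[of x] that by simp
        qed
      qed simp
      then have "\<forall>\<^sub>F t in at_top. ?h t = ?h a" unfolding eventually_at_top_linorder by blast
      with Suc.IH show False by blast
    qed
  qed
qed

lemma G1nz: "\<forall>\<^sub>F t in at_top. hderiv j f t \<noteq> 0"
proof -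
  have hj: "hderiv j f \<in> H" by (rule H_hderiv[OF HF fH])
  from H_sign[OF HF hj] consider "\<forall>\<^sub>F t in at_top. hderiv j f t = 0" | "\<forall>\<^sub>F t in at_top. hderiv j f t > 0"
    | "\<forall>\<^sub>F t in at_top. hderiv j f t < 0" by blast
  then show ?thesis
  proof cases
    case 1 with NEC[of j] show ?thesis by blast
  next
    case 2 then show ?thesis by (rule eventually_mono) simp
  next
    case 3 then show ?thesis by (rule eventually_mono) simp
  qed
qed

lemma G1: "(\<forall>\<^sub>F t in at_top. hderiv j f t \<noteq> 0) \<and>
   ((hderiv j f \<longlongrightarrow> 0) at_top \<or> filterlim (\<lambda>t. \<bar>hderiv j f t\<bar>) at_top at_top)"
proof
  show "\<forall>\<^sub>F t in at_top. hderiv j f t \<noteq> 0" by (rule G1nz)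
  have hj: "hderiv j f \<in> H" by (rule H_hderiv[OF HF fH])
  from H_lim_abs[OF HF hj] show "(hderiv j f \<longlongrightarrow> 0) at_top \<or> filterlim (\<lambda>t. \<bar>hderiv j f t\<bar>) at_top at_top"
  proof
    assume "\<exists>c. (hderiv j f \<longlongrightarrow> c) at_top"
    then obtain c where c: "(hderiv j f \<longlongrightarrow> c) at_top" by blast
    with NC[OF c] show ?thesis by simp
  qed simp
qed

lemma deriv_ident: "deriv (\<lambda>t::real. t) = (\<lambda>_. 1)"
  by (rule ext) (rule DERIV_imp_deriv, rule DERIV_ident)

lemma G2: assumes adm: "admissible f k" shows "admissible f (Suc k)"
proof -
  have sp: "sprec (hderiv k f) (\<lambda>t. t)"
    unfolding sprec_def
    by (rule tendsto_divide_0[OF adm[unfolded admissible_def]])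
       (rule filterlim_at_top_imp_at_infinity[OF filterlim_ident])
  have "sprec (deriv (hderiv k f)) (deriv (\<lambda>t. t))"
  proof (rule up_sprec[OF HF H_hderiv[OF HF fH] H_id[OF HF] _ _ _ sp])
    show "\<forall>\<^sub>F x in at_top. (x::real) \<noteq> 0" using eventually_gt_at_top[of 0] by (rule eventually_mono) simp
    show "\<forall>\<^sub>F x in at_top. deriv (\<lambda>t::real. t) x \<noteq> 0" by (simp add: deriv_ident)
    show "filterlim (\<lambda>x::real. \<bar>x\<bar>) at_top at_top \<or> ((\<lambda>t. t) \<longlongrightarrow> 0) at_top"
      using abs_at_top_of_at_top[OF filterlim_ident] by blast
  qed
  then show ?thesis unfolding admissible_def sprec_def deriv_ident hderiv_Suc by simp
qed

lemma adm_mono: "admissible f k \<Longrightarrow> k \<le> j \<Longrightarrow> admissible f j"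
proof (induction j)
  case 0 then show ?case by simp
next
  case (Suc j)
  show ?case
  proof (cases "k \<le> j")
    case True then show ?thesis using Suc G2 by blast
  next
    case False then have "k = Suc j" using Suc.prems by simp
    then show ?thesis using Suc.prems by simp
  qed
qed

lemma not_adm0: "\<not> admissible f 0"
proof
  assume "admissible f 0"
  then have "(f \<longlongrightarrow> 0) at_top" unfolding admissible_def by simp
  then have e1: "\<forall>\<^sub>F t in at_top. \<bar>f t\<bar> < 1" using order_tendstoD(2)[OF tendsto_rabs, of f 0 at_top 1] by simp
  have e2: "\<forall>\<^sub>F t in at_top. 1 \<le> \<bar>f t\<bar>" using f_abs_inf unfolding filterlim_at_top by blast
  show False using eventually_conj[OF e1 e2] by (rule ev_contra) auto
qed

end
end

lemma half_nonint: "real D + 3/2 \<noteq> real (i::nat)"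
proof
  assume "real D + 3/2 = real i"
  then have "real (2 * i) = real (2 * D + 3)" by simp
  then have "2 * i = 2 * D + 3" by (simp only: of_nat_eq_iff)
  then show False by presburger
qed

lemma min_nonint: assumes "\<delta> > 0" shows "min \<delta> (1/2) \<noteq> real (i::nat)"
proof (cases i)
  case 0 then show ?thesis using assms by simp
next
  case (Suc j) then have "real i \<ge> 1" by simp
  then show ?thesis by (simp add: min_def)
qed

context
  fixes H :: "(real \<Rightarrow> real) set"
  assumes HF: "good_hardy_field H"
begin

context
  fixes f :: "real \<Rightarrow> real" and \<delta> :: real
  assumes fH: "f \<in> H" and snp: "strongly_nonpoly f" and \<delta>: "\<delta> > 0"
    and ll: "lless (\<lambda>t. t powr \<delta>) f"
begin

lemmas G1' = G1[OF HF fH snp \<delta> ll]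
lemmas G1nz' = G1nz[OF HF fH snp \<delta> ll]
lemmas adm_mono' = adm_mono[OF HF fH snp \<delta> ll]
lemmas not_adm0' = not_adm0[OF HF fH snp \<delta> ll]

lemma LB: "\<exists>c>0. \<forall>\<^sub>F t in at_top. c * t powr (min \<delta> (1/2) - real k) \<le> \<bar>hderiv k f t\<bar>"
proof -
  define e where "e = min \<delta> (1/2)"
  have pH: "(\<lambda>t. t powr e) \<in> H" by (rule H_rpow[OF HF])
  have "lless (\<lambda>t. t powr e) (\<lambda>t. t powr \<delta>)"
    unfolding lless_def
  proof (intro exI[of _ 1])
    show "\<forall>\<^sub>F t in at_top. \<bar>t powr e\<bar> \<le> 1 * \<bar>t powr \<delta>\<bar>"
      using eventually_ge_at_top[of 1] by (rule eventually_mono) (simp add: e_def powr_mono)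
  qed
  then have "lless (\<lambda>t. t powr e) f" using ll by (rule lless_trans)
  from L1gen[OF HF pH fH G1' this] have "lless (hderiv k (\<lambda>t. t powr e)) (hderiv k f)" .
  then obtain C where C: "\<forall>\<^sub>F t in at_top. \<bar>hderiv k (\<lambda>t. t powr e) t\<bar> \<le> C * \<bar>hderiv k f t\<bar>"
    unfolding lless_def by blast
  have pc: "pc e k \<noteq> 0" unfolding e_def by (rule pc_nz[OF min_nonint[OF \<delta>]])
  define c where "c = \<bar>pc e k\<bar> / (\<bar>C\<bar> + 1)"
  have c: "c > 0" using pc unfolding c_def by (simp add: add_pos_nonneg)
  have "\<forall>\<^sub>F t in at_top. c * t powr (e - real k) \<le> \<bar>hderiv k f t\<bar>"
    using C powr_hderiv_ev[of k e] eventually_gt_at_top[of 0]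
  proof eventually_elim
    case (elim t)
    have "\<bar>pc e k\<bar> * t powr (e - real k) = \<bar>hderiv k (\<lambda>t. t powr e) t\<bar>"
      using elim(2,3) by (simp add: abs_mult)
    also have "\<dots> \<le> C * \<bar>hderiv k f t\<bar>" by (rule elim(1))
    also have "\<dots> \<le> (\<bar>C\<bar> + 1) * \<bar>hderiv k f t\<bar>" by (intro mult_right_mono) auto
    finally have "\<bar>pc e k\<bar> * t powr (e - real k) \<le> (\<bar>C\<bar> + 1) * \<bar>hderiv k f t\<bar>" .
    then show ?case unfolding c_def by (simp add: field_simps add_pos_nonneg)
  qed
  with c show ?thesis unfolding e_def by blast
qed

lemma UB:
  assumes D: "sprec f (\<lambda>t. t ^ (D + 1))"
  shows "\<exists>C. \<forall>\<^sub>F t in at_top. \<bar>hderiv k f t\<bar> \<le> C * t powr (real D + 3/2 - real k)"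
proof -
  define a where "a = real D + 3/2"
  have anon: "\<And>i::nat. a \<noteq> real i" unfolding a_def by (rule half_nonint)
  have l1: "lless f (\<lambda>t. t ^ (D + 1))"
  proof (rule sprec_lless[OF D])
    show "\<forall>\<^sub>F t in at_top. (t::real) ^ (D + 1) \<noteq> 0"
      using eventually_gt_at_top[of 0] by (rule eventually_mono) simp
  qed
  have l2: "lless (\<lambda>t. t ^ (D + 1)) (\<lambda>t. t powr a)"
    unfolding lless_def
  proof (intro exI[of _ 1])
    show "\<forall>\<^sub>F t in at_top. \<bar>t ^ (D + 1)\<bar> \<le> 1 * \<bar>t powr a\<bar>"
      using eventually_ge_at_top[of 1]
    proof (rule eventually_mono)
      fix t :: real assume t: "1 \<le> t"
      have "t ^ (D + 1) = t powr real (D + 1)" using t by (subst powr_realpow) auto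
      also have "\<dots> \<le> t powr a" by (rule powr_mono) (use t in \<open>auto simp: a_def\<close>)
      finally show "\<bar>t ^ (D + 1)\<bar> \<le> 1 * \<bar>t powr a\<bar>" using t by simp
    qed
  qed
  have "lless f (\<lambda>t. t powr a)" by (rule lless_trans[OF l1 l2])
  from L1gen[OF HF fH H_rpow[OF HF] powr_reg[OF anon] this]
  have "lless (hderiv k f) (hderiv k (\<lambda>t. t powr a))" .
  then obtain C where C: "\<forall>\<^sub>F t in at_top. \<bar>hderiv k f t\<bar> \<le> C * \<bar>hderiv k (\<lambda>t. t powr a) t\<bar>"
    unfolding lless_def by blast
  have "\<forall>\<^sub>F t in at_top. \<bar>hderiv k f t\<bar> \<le> (\<bar>C\<bar> * \<bar>pc a k\<bar>) * t powr (a - real k)"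
    using C powr_hderiv_ev[of k a] eventually_gt_at_top[of 0]
  proof eventually_elim
    case (elim t)
    have "\<bar>hderiv k f t\<bar> \<le> C * \<bar>hderiv k (\<lambda>t. t powr a) t\<bar>" by (rule elim(1))
    also have "\<dots> \<le> \<bar>C\<bar> * \<bar>hderiv k (\<lambda>t. t powr a) t\<bar>" by (intro mult_right_mono) auto
    also have "\<dots> = (\<bar>C\<bar> * \<bar>pc a k\<bar>) * t powr (a - real k)"
      using elim(2,3) by (simp add: abs_mult)
    finally show ?case .
  qed
  then show ?thesis unfolding a_def by blast
qed

lemma adm_large:
  assumes D: "sprec f (\<lambda>t. t ^ (D + 1))" and k: "k \<ge> D + 2"
  shows "admissible f k"
proof -
  from UB[OF D] obtain C where C: "\<forall>\<^sub>F t in at_top. \<bar>hderiv k f t\<bar> \<le> C * t powr (real D + 3/2 - real k)"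
    by blast
  have neg: "real D + 3/2 - real k < 0" using k by simp
  have "((\<lambda>t. C * t powr (real D + 3/2 - real k)) \<longlongrightarrow> C * 0) at_top"
    by (intro tendsto_mult tendsto_const powr_tendsto_zero_real neg)
  then have "((\<lambda>t. C * t powr (real D + 3/2 - real k)) \<longlongrightarrow> 0) at_top" by simp
  then show ?thesis unfolding admissible_def
    by (rule Lim_null_comparison[rotated]) (use C in simp)
qed

lemma RP: "\<forall>\<^sub>F t in at_top. rootderiv f k t > 0"
  using G1nz'[of k] by (rule eventually_mono) (simp add: rootderiv_def)

lemma RH: assumes adm: "admissible f k" shows "rootderiv f k \<in> H"
proof -
  define au where "au = (\<lambda>t. \<bar>hderiv k f t\<bar>)"
  have auH: "au \<in> H" unfolding au_def by (rule H_abs[OF HF H_hderiv[OF HF fH]])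
  have aupos: "\<forall>\<^sub>F t in at_top. au t > 0" unfolding au_def using G1nz'[of k] by (rule eventually_mono) simp
  have au0: "(au \<longlongrightarrow> 0) at_top" unfolding au_def using tendsto_rabs[OF adm[unfolded admissible_def]] by simp
  have iuH: "(\<lambda>t. 1 / au t) \<in> H" by (rule H_inv[OF HF auH]) (use aupos in \<open>auto elim: eventually_mono\<close>)
  have iuinf: "filterlim (\<lambda>t. 1 / au t) at_top at_top"
    using filterlim_inverse_at_top[OF au0 aupos] by (simp add: inverse_eq_divide)
  from H_powr[OF HF iuH iuinf, of "1 / real k"]
  have "(\<lambda>t. (1 / au t) powr (1 / real k)) \<in> H" .
  moreover have "\<forall>\<^sub>F t in at_top. (1 / au t) powr (1 / real k) = rootderiv f k t"
    using aupos
  proof (rule eventually_mono)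
    fix t assume "au t > 0"
    then show "(1 / au t) powr (1 / real k) = rootderiv f k t"
      unfolding rootderiv_def au_def by (simp add: powr_divide powr_minus_divide)
  qed
  ultimately show ?thesis by (rule H_ev[OF HF])
qed

end
end

lemma ln_bound_aux:
  fixes X t c e :: real and k :: nat
  assumes X: "0 < X" "X < 1" and t: "1 < t" and c: "c > 0" and e: "e > 0"
    and low: "c * t powr (e - real k) \<le> X"
  shows "\<bar>ln X\<bar> \<le> - ln c + real k * ln t"
proof -
  have lnX: "ln X < 0" using X by simp
  have pos: "0 < c * t powr (e - real k)" using c t by simp
  have "ln (c * t powr (e - real k)) \<le> ln X" using low pos X by simp
  moreover have "ln (c * t powr (e - real k)) = ln c + (e - real k) * ln t"
    using c t by (simp add: ln_mult)
  moreover have "(e - real k) * ln t \<ge> - real k * ln t"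
    using e t by (intro mult_right_mono) auto
  ultimately show ?thesis using lnX by linarith
qed

context
  fixes H :: "(real \<Rightarrow> real) set"
  assumes HF: "good_hardy_field H"
begin

context
  fixes f :: "real \<Rightarrow> real" and \<delta> :: real
  assumes fH: "f \<in> H" and snp: "strongly_nonpoly f" and \<delta>: "\<delta> > 0"
    and ll: "lless (\<lambda>t. t powr \<delta>) f"
begin

lemmas G1nz'' = G1nz[OF HF fH snp \<delta> ll]
lemmas LB' = LB[OF HF fH snp \<delta> ll]
lemmas not_adm0'' = not_adm0[OF HF fH snp \<delta> ll]

lemma LD:
  assumes adm: "admissible f k"
  shows "\<exists>B. \<forall>\<^sub>F t in at_top. \<bar>t * hderiv (Suc k) f t\<bar> \<le> B * \<bar>hderiv k f t\<bar>"
proof -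
  define u where "u = hderiv k f"
  define u' where "u' = hderiv (Suc k) f"
  have uH: "u \<in> H" unfolding u_def by (rule H_hderiv[OF HF fH])
  have u'H: "u' \<in> H" unfolding u'_def by (rule H_hderiv[OF HF fH])
  have unz: "\<forall>\<^sub>F t in at_top. u t \<noteq> 0" unfolding u_def by (rule G1nz'')
  define w where "w = (\<lambda>t. t * u' t / u t)"
  have wH: "w \<in> H" unfolding w_def by (intro H_divide[OF HF] H_mult[OF HF] H_id[OF HF] u'H uH unz)
  from H_lim_abs[OF HF wH] show ?thesis
  proof
    assume "\<exists>c. (w \<longlongrightarrow> c) at_top"
    then obtain c where c: "(w \<longlongrightarrow> c) at_top" by blast
    have "\<forall>\<^sub>F x in at_top. \<bar>w x\<bar> < \<bar>c\<bar> + 1"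
      using order_tendstoD(2)[OF tendsto_rabs[OF c]] by simp
    with unz have "\<forall>\<^sub>F t in at_top. \<bar>t * u' t\<bar> \<le> (\<bar>c\<bar> + 1) * \<bar>u t\<bar>"
      by eventually_elim (simp add: w_def abs_divide divide_less_eq)
    then show ?thesis unfolding u_def u'_def by blast
  next
    assume winf: "filterlim (\<lambda>x. \<bar>w x\<bar>) at_top at_top"
    from H_nonzero_sign[OF HF uH unz] obtain s :: real where s: "s = 1 \<or> s = -1" "\<forall>\<^sub>F t in at_top. s * u t > 0"
    proof
      assume "\<forall>\<^sub>F t in at_top. u t > 0" then show thesis using that[of 1] by simp
    next
      assume "\<forall>\<^sub>F t in at_top. u t < 0" then show thesis using that[of "-1"] by simp
    qed
    from LB'[of k] obtain c0 where c0: "c0 > 0"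
      "\<forall>\<^sub>F t in at_top. c0 * t powr (min \<delta> (1/2) - real k) \<le> \<bar>hderiv k f t\<bar>" by blast
    define e where "e = min \<delta> (1/2)"
    have e: "e > 0" using \<delta> unfolding e_def by simp
    define M where "M = 2 * real k + 2"
    have M: "M > 0" unfolding M_def by simp
    have Du: "\<forall>\<^sub>F t in at_top. DERIV u t :> u' t"
      using H_DERIV[OF HF uH] unfolding u_def u'_def hderiv_Suc .
    have u0: "(u \<longlongrightarrow> 0) at_top" using adm unfolding admissible_def u_def .
    have ulow: "\<forall>\<^sub>F t in at_top. \<bar>u t\<bar> < 1"
      using order_tendstoD(2)[OF tendsto_rabs[OF u0], of 1] by simp
    have wbig: "\<forall>\<^sub>F t in at_top. M \<le> \<bar>w t\<bar>" using winf unfolding filterlim_at_top by blast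
    have cm: "\<forall>\<^sub>F t in at_top. M/2 * \<bar>ln t\<bar> \<le> \<bar>ln (s * u t)\<bar>"
    proof (rule cm_inf[where u' = "\<lambda>t. 1 / (s * u t) * (s * u' t)" and v' = "\<lambda>t. 1 / t"])
      show "M > 0" by fact
      show "filterlim (\<lambda>x::real. \<bar>ln x\<bar>) at_top at_top" using abs_at_top_of_at_top[OF ln_at_top] by simp
      show "\<forall>\<^sub>F x in at_top. DERIV (\<lambda>t. ln (s * u t)) x :> 1 / (s * u x) * (s * u' x) \<and>
          DERIV ln x :> 1 / x \<and> 1 / x \<noteq> 0 \<and> M * \<bar>1 / x\<bar> \<le> \<bar>1 / (s * u x) * (s * u' x)\<bar>"
        using Du s(2) wbig eventually_gt_at_top[of 0]
      proof eventually_elim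
        case (elim x)
        have D1: "DERIV (\<lambda>t. s * u t) x :> s * u' x" by (rule DERIV_cmult[OF elim(1)])
        have D2: "DERIV (\<lambda>t. ln (s * u t)) x :> 1 / (s * u x) * (s * u' x)"
          by (rule DERIV_chain2[OF DERIV_ln_divide[OF elim(2)] D1])
        have sabs: "\<bar>s\<bar> = 1" using s(1) by auto
        have "\<bar>1 / (s * u x) * (s * u' x)\<bar> = \<bar>u' x\<bar> / \<bar>u x\<bar>"
          using sabs elim(2) by (auto simp: abs_mult abs_divide)
        moreover have "\<bar>w x\<bar> = x * (\<bar>u' x\<bar> / \<bar>u x\<bar>)"
          using elim(4) by (simp add: w_def abs_mult abs_divide)
        ultimately have "M * \<bar>1 / x\<bar> \<le> \<bar>1 / (s * u x) * (s * u' x)\<bar>"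
          using elim(3,4) by (simp add: field_simps)
        then show ?case using D1 D2 DERIV_ln_divide[OF elim(4)] elim(4) by simp
      qed
    qed
    have lnbig: "\<forall>\<^sub>F t in at_top. \<bar>ln c0\<bar> < ln t"
      using ln_at_top unfolding filterlim_at_top_dense by blast
    have False
      using eventually_conj[OF cm eventually_conj[OF lnbig eventually_conj[OF ulow
          eventually_conj[OF s(2) eventually_conj[OF c0(2) eventually_gt_at_top[of 1]]]]]]
    proof (rule ev_contra)
      fix t assume A: "M/2 * \<bar>ln t\<bar> \<le> \<bar>ln (s * u t)\<bar> \<and> \<bar>ln c0\<bar> < ln t \<and> \<bar>u t\<bar> < 1 \<and> 0 < s * u t \<and>
          c0 * t powr (min \<delta> (1/2) - real k) \<le> \<bar>hderiv k f t\<bar> \<and> 1 < t"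
      have sut: "s * u t = \<bar>u t\<bar>" using s(1) A by auto
      have b: "\<bar>ln \<bar>u t\<bar>\<bar> \<le> - ln c0 + real k * ln t"
        by (rule ln_bound_aux[OF _ _ _ c0(1) e]) (use A sut in \<open>auto simp: e_def u_def\<close>)
      have lt: "ln t > 0" using A by simp
      have e1: "M/2 * \<bar>ln t\<bar> \<le> \<bar>ln \<bar>u t\<bar>\<bar>" using A sut by metis
      have e2: "M/2 * \<bar>ln t\<bar> = (real k + 1) * ln t" using lt unfolding M_def by simp
      have "(real k + 1) * ln t \<le> - ln c0 + real k * ln t" using e1 e2 b by linarith
      then have "ln t \<le> - ln c0" by (simp add: algebra_simps)
      then show False using A by linarith
    qed
    then show ?thesis by simp
  qed
qed

lemma L2:
  assumes adm: "admissible f k"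
  shows "sprec (rootderiv f k) (rootderiv f (Suc k))"
proof -
  have k: "k > 0" using adm not_adm0'' by (cases k) auto
  from LD[OF adm] obtain B where B: "\<forall>\<^sub>F t in at_top. \<bar>t * hderiv (Suc k) f t\<bar> \<le> B * \<bar>hderiv k f t\<bar>" by blast
  from LB'[of k] obtain c0 where c0: "c0 > 0"
    "\<forall>\<^sub>F t in at_top. c0 * t powr (min \<delta> (1/2) - real k) \<le> \<bar>hderiv k f t\<bar>" by blast
  define R where "R = (\<lambda>t. rootderiv f k t / rootderiv f (Suc k) t)"
  define N where "N = real k * real (Suc k)"
  have N: "N > 0" using k unfolding N_def by simp
  define K where "K = \<bar>B\<bar> ^ k / c0"
  have RN: "\<forall>\<^sub>F t in at_top. R t powr N \<le> K * t powr (- min \<delta> (1/2))"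
    using B c0(2) G1nz''[of k] G1nz''[of "Suc k"] eventually_gt_at_top[of 0]
  proof eventually_elim
    case (elim t)
    have "(\<bar>hderiv k f t\<bar> powr (- 1 / real k) / \<bar>hderiv (Suc k) f t\<bar> powr (- 1 / real (Suc k))) powr (real k * real (Suc k))
        \<le> (\<bar>B\<bar> ^ k / c0) * t powr (- min \<delta> (1/2))"
    proof (rule L2_pointwise[OF _ _ elim(5) k _ c0(1)])
      show "0 < \<bar>hderiv k f t\<bar>" "0 < \<bar>hderiv (Suc k) f t\<bar>" using elim by auto
      show "\<bar>t * \<bar>hderiv (Suc k) f t\<bar>\<bar> \<le> B * \<bar>hderiv k f t\<bar>" using elim(1) elim(5) by (simp add: abs_mult)
      show "c0 * t powr (min \<delta> (1/2) - real k) \<le> \<bar>hderiv k f t\<bar>" by (rule elim(2))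
    qed
    then show ?case unfolding R_def N_def K_def rootderiv_def .
  qed
  have Rnn: "\<forall>\<^sub>F t in at_top. R t \<ge> 0" unfolding R_def rootderiv_def by simp
  have lim1: "((\<lambda>t. K * t powr (- min \<delta> (1/2))) \<longlongrightarrow> K * 0) at_top"
    by (intro tendsto_mult tendsto_const powr_tendsto_zero_real) (use \<delta> in simp)
  have RN0: "((\<lambda>t. R t powr N) \<longlongrightarrow> 0) at_top"
  proof (rule Lim_null_comparison)
    show "\<forall>\<^sub>F t in at_top. norm (R t powr N) \<le> K * t powr (- min \<delta> (1/2))"
      using RN by (rule eventually_mono) simp
    show "((\<lambda>t. K * t powr (- min \<delta> (1/2))) \<longlongrightarrow> 0) at_top" using lim1 by simp
  qed
  have "((\<lambda>t. (R t powr N) powr (1 / N)) \<longlongrightarrow> 0) at_top"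
    by (rule tendsto_zero_powrI[OF RN0 tendsto_const]) (use N in auto)
  moreover have "\<forall>\<^sub>F t in at_top. (R t powr N) powr (1 / N) = R t"
    using Rnn by (rule eventually_mono) (use N in \<open>simp add: powr_powr powr_one\<close>)
  ultimately have "(R \<longlongrightarrow> 0) at_top" by (rule Lim_transform_eventually)
  then show ?thesis unfolding sprec_def R_def .
qed

end
end

lemma wprec_lower:
  assumes "wprec p h" "\<forall>\<^sub>F t in at_top. p t \<noteq> 0"
  shows "\<exists>c>0. \<forall>\<^sub>F t in at_top. c * \<bar>p t\<bar> \<le> \<bar>h t\<bar>"
proof -
  have "\<exists>c>0. \<forall>\<^sub>F t in at_top. c \<le> \<bar>h t / p t\<bar>"
    using assms(1) unfolding wprec_def
  proof
    assume "\<exists>L>0. ((\<lambda>t. \<bar>h t / p t\<bar>) \<longlongrightarrow> L) at_top"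
    then obtain L where L: "L > 0" "((\<lambda>t. \<bar>h t / p t\<bar>) \<longlongrightarrow> L) at_top" by blast
    have "L/2 < L" using L by simp
    from order_tendstoD(1)[OF L(2) this] have "\<forall>\<^sub>F t in at_top. L/2 \<le> \<bar>h t / p t\<bar>"
      by (rule eventually_mono) simp
    then show ?thesis using L by (intro exI[of _ "L/2"]) simp
  next
    assume "filterlim (\<lambda>t. \<bar>h t / p t\<bar>) at_top at_top"
    then have "\<forall>\<^sub>F t in at_top. 1 \<le> \<bar>h t / p t\<bar>" unfolding filterlim_at_top by blast
    then show ?thesis by (intro exI[of _ 1]) simp
  qed
  then obtain c where c: "c > 0" "\<forall>\<^sub>F t in at_top. c \<le> \<bar>h t / p t\<bar>" by blast
  from c(2) assms(2) have "\<forall>\<^sub>F t in at_top. c * \<bar>p t\<bar> \<le> \<bar>h t\<bar>"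
    by eventually_elim (simp add: abs_divide le_divide_eq)
  with c(1) show ?thesis by blast
qed

lemma sprec_not_wprec:
  assumes "sprec u v" "wprec v u" shows False
proof -
  have z: "((\<lambda>t. \<bar>u t / v t\<bar>) \<longlongrightarrow> 0) at_top" using tendsto_rabs[OF assms(1)[unfolded sprec_def]] by simp
  from assms(2) show False unfolding wprec_def
  proof
    assume "\<exists>L>0. ((\<lambda>t. \<bar>u t / v t\<bar>) \<longlongrightarrow> L) at_top"
    then obtain L where L: "L > 0" "((\<lambda>t. \<bar>u t / v t\<bar>) \<longlongrightarrow> L) at_top" by blast
    have "L = 0" by (rule tendsto_unique[OF trivial_limit_at_top_linorder L(2) z])
    with L(1) show False by simp
  next
    assume "filterlim (\<lambda>t. \<bar>u t / v t\<bar>) at_top at_top"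
    then have e1: "\<forall>\<^sub>F t in at_top. 1 \<le> \<bar>u t / v t\<bar>" unfolding filterlim_at_top by blast
    have e2: "\<forall>\<^sub>F t in at_top. \<bar>u t / v t\<bar> < 1" using order_tendstoD(2)[OF z, of 1] by simp
    show False using eventually_conj[OF e1 e2] by (rule ev_contra) linarith
  qed
qed

lemma wprec_both:
  assumes "wprec p q" "wprec q p"
  shows "\<exists>L>0. ((\<lambda>t. \<bar>q t / p t\<bar>) \<longlongrightarrow> L) at_top"
proof -
  from assms(1) show ?thesis unfolding wprec_def
  proof
    assume inf: "filterlim (\<lambda>t. \<bar>q t / p t\<bar>) at_top at_top"
    have "((\<lambda>t. inverse \<bar>q t / p t\<bar>) \<longlongrightarrow> 0) at_top"
      by (rule tendsto_inverse_0_at_top[OF inf])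
    moreover have eq: "inverse \<bar>q t / p t\<bar> = \<bar>p t / q t\<bar>" for t
      by (simp only: abs_divide inverse_divide)
    ultimately have "((\<lambda>t. \<bar>p t / q t\<bar>) \<longlongrightarrow> 0) at_top" by simp
    then have "sprec p q" unfolding sprec_def by (rule tendsto_rabs_zero_cancel)
    from sprec_not_wprec[OF this assms(2)] show ?thesis by simp
  qed
qed

lemma wprec_transfer:
  assumes "wprec p h" and lim: "((\<lambda>t. p t / p2 t) \<longlongrightarrow> A) at_top" and A: "A > 0"
    and pos: "\<forall>\<^sub>F t in at_top. p t > 0"
  shows "wprec p2 h"
proof -
  have eq: "\<forall>\<^sub>F t in at_top. \<bar>h t / p t\<bar> * (p t / p2 t) = \<bar>h t / p2 t\<bar>"
  proof -
    have "\<forall>\<^sub>F t in at_top. p t / p2 t > 0" using order_tendstoD(1)[OF lim A] .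
    with pos show ?thesis
    proof eventually_elim
      case (elim t)
      then have "p2 t > 0" by (simp add: zero_less_divide_iff)
      with elim show ?case by (simp add: abs_divide abs_mult)
    qed
  qed
  from assms(1)[unfolded wprec_def] show ?thesis
  proof
    assume "\<exists>L>0. ((\<lambda>t. \<bar>h t / p t\<bar>) \<longlongrightarrow> L) at_top"
    then obtain L where L: "L > 0" "((\<lambda>t. \<bar>h t / p t\<bar>) \<longlongrightarrow> L) at_top" by blast
    have "((\<lambda>t. \<bar>h t / p t\<bar> * (p t / p2 t)) \<longlongrightarrow> L * A) at_top" by (intro tendsto_mult L lim)
    then have "((\<lambda>t. \<bar>h t / p2 t\<bar>) \<longlongrightarrow> L * A) at_top" by (rule Lim_transform_eventually[OF _ eq])
    moreover have "L * A > 0" using L A by simp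
    ultimately show ?thesis unfolding wprec_def by blast
  next
    assume inf: "filterlim (\<lambda>t. \<bar>h t / p t\<bar>) at_top at_top"
    have "filterlim (\<lambda>t. \<bar>h t / p t\<bar> * (p t / p2 t)) at_top at_top"
      by (rule filterlim_at_top_mult_tendsto_pos[OF lim A inf])
    then have "filterlim (\<lambda>t. \<bar>h t / p2 t\<bar>) at_top at_top"
      by (rule filterlim_cong[THEN iffD1, OF refl refl eq])
    then show ?thesis unfolding wprec_def by blast
  qed
qed

lemma sprec_transfer:
  assumes "sprec h q" and lim: "((\<lambda>t. q t / q2 t) \<longlongrightarrow> B) at_top"
    and pos: "\<forall>\<^sub>F t in at_top. q t \<noteq> 0"
  shows "sprec h q2"
proof -
  have eq: "\<forall>\<^sub>F t in at_top. (h t / q t) * (q t / q2 t) = h t / q2 t"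
    using pos by (rule eventually_mono) simp
  have "((\<lambda>t. (h t / q t) * (q t / q2 t)) \<longlongrightarrow> 0 * B) at_top"
    by (intro tendsto_mult lim assms(1)[unfolded sprec_def])
  then show ?thesis unfolding sprec_def using Lim_transform_eventually[OF _ eq] by simp
qed

lemma rd_ratio:
  fixes F G :: "real \<Rightarrow> real"
  assumes lim: "((\<lambda>t. F t / G t) \<longlongrightarrow> L) at_top" and L: "L \<noteq> 0"
    and nz: "\<forall>\<^sub>F t in at_top. G t \<noteq> 0"
  shows "((\<lambda>t. \<bar>F t\<bar> powr a / \<bar>G t\<bar> powr a) \<longlongrightarrow> \<bar>L\<bar> powr a) at_top"
proof -
  have "((\<lambda>t. \<bar>F t / G t\<bar> powr a) \<longlongrightarrow> \<bar>L\<bar> powr a) at_top"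
    by (rule tendsto_powr[OF tendsto_rabs[OF lim] tendsto_const]) (use L in simp)
  then show ?thesis by (simp add: abs_divide powr_divide)
qed

lemma rd_pw_up:
  fixes X t c e :: real and k :: nat
  assumes "k > 0" "t > 0" "c > 0" "c * t powr (e - real k) \<le> X"
  shows "X powr (- 1 / real k) \<le> c powr (- 1 / real k) * t powr (1 - e / real k)"
proof -
  have pos: "0 < c * t powr (e - real k)" using assms by simp
  have "X powr (- 1 / real k) \<le> (c * t powr (e - real k)) powr (- 1 / real k)"
    by (rule powr_mono2'[OF _ pos assms(4)]) simp
  also have "\<dots> = c powr (- 1 / real k) * t powr ((e - real k) * (- 1 / real k))"
    using assms by (simp add: powr_mult powr_powr)
  also have "(e - real k) * (- 1 / real k) = 1 - e / real k" using assms(1) by (simp add: field_simps)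
  finally show ?thesis .
qed

lemma rd_pw_low:
  fixes X t C a :: real and k :: nat
  assumes "k > 0" "t > 0" "X > 0" "X \<le> C * t powr (a - real k)"
  shows "(\<bar>C\<bar> + 1) powr (- 1 / real k) * t powr (1 - a / real k) \<le> X powr (- 1 / real k)"
proof -
  have "X \<le> (\<bar>C\<bar> + 1) * t powr (a - real k)"
    using assms(4) by (smt (verit) assms(2) mult_right_mono powr_ge_zero abs_ge_self)
  then have "((\<bar>C\<bar> + 1) * t powr (a - real k)) powr (- 1 / real k) \<le> X powr (- 1 / real k)"
    by (intro powr_mono2'[OF _ assms(3)]) simp
  also have "((\<bar>C\<bar> + 1) * t powr (a - real k)) powr (- 1 / real k) =
      (\<bar>C\<bar> + 1) powr (- 1 / real k) * t powr ((a - real k) * (- 1 / real k))"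
    using assms by (simp add: powr_mult powr_powr add_pos_nonneg)
  also have "(a - real k) * (- 1 / real k) = 1 - a / real k" using assms(1) by (simp add: field_simps)
  finally show ?thesis .
qed

context
  fixes H :: "(real \<Rightarrow> real) set"
  assumes HF: "good_hardy_field H"
begin

lemma self_in_S:
  assumes fH: "f \<in> H" and snp: "strongly_nonpoly f" and \<delta>: "\<delta> > 0" and ll: "lless (\<lambda>t. t powr \<delta>) f"
    and adm: "admissible f k"
  shows "rootderiv f k \<in> S H f k"
proof -
  have "wprec (rootderiv f k) (rootderiv f k)"
  proof -
    have "\<forall>\<^sub>F t in at_top. 1 = \<bar>rootderiv f k t / rootderiv f k t\<bar>"
      using RP[OF HF fH snp \<delta> ll, of k] by (rule eventually_mono) simp
    then have "((\<lambda>t. \<bar>rootderiv f k t / rootderiv f k t\<bar>) \<longlongrightarrow> 1) at_top"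
      by (rule Lim_transform_eventually[OF tendsto_const])
    then show ?thesis unfolding wprec_def by (intro disjI1 exI[of _ 1]) simp
  qed
  then show ?thesis unfolding S_def using RH[OF HF fH snp \<delta> ll adm] L2[OF HF fH snp \<delta> ll adm] by simp
qed

lemma rd_lower_lless:
  assumes "lless G F" "\<forall>\<^sub>F t in at_top. F t \<noteq> 0" "\<forall>\<^sub>F t in at_top. G t \<noteq> 0"
  shows "\<exists>c>0. \<forall>\<^sub>F t in at_top. c * \<bar>F t\<bar> powr (- 1 / real l) \<le> \<bar>G t\<bar> powr (- 1 / real l)"
proof -
  from assms(1) obtain C where C: "\<forall>\<^sub>F t in at_top. \<bar>G t\<bar> \<le> C * \<bar>F t\<bar>" unfolding lless_def by blast
  define C' where "C' = \<bar>C\<bar> + 1"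
  have C': "C' > 0" unfolding C'_def by (simp add: add_pos_nonneg)
  have "\<forall>\<^sub>F t in at_top. C' powr (- 1 / real l) * \<bar>F t\<bar> powr (- 1 / real l) \<le> \<bar>G t\<bar> powr (- 1 / real l)"
    using C assms(2,3)
  proof eventually_elim
    case (elim t)
    have "C * \<bar>F t\<bar> \<le> C' * \<bar>F t\<bar>" unfolding C'_def by (intro mult_right_mono) auto
    with elim have le: "\<bar>G t\<bar> \<le> C' * \<bar>F t\<bar>" by linarith
    have "(C' * \<bar>F t\<bar>) powr (- 1 / real l) \<le> \<bar>G t\<bar> powr (- 1 / real l)"
      by (rule powr_mono2'[OF _ _ le]) (use elim in auto)
    then show ?case using C' by (simp add: powr_mult)
  qed
  moreover have "C' powr (- 1 / real l) > 0" using C' by simp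
  ultimately show ?thesis by blast
qed

context
  fixes f g :: "real \<Rightarrow> real" and \<delta>1 \<delta>2 :: real
  assumes fH: "f \<in> H" and snpf: "strongly_nonpoly f" and \<delta>1: "\<delta>1 > 0" and llf: "lless (\<lambda>t. t powr \<delta>1) f"
    and gH: "g \<in> H" and snpg: "strongly_nonpoly g" and \<delta>2: "\<delta>2 > 0" and llg: "lless (\<lambda>t. t powr \<delta>2) g"
begin

lemmas Gf = G1[OF HF fH snpf \<delta>1 llf]
lemmas Gg = G1[OF HF gH snpg \<delta>2 llg]
lemmas Gfnz = G1nz[OF HF fH snpf \<delta>1 llf]
lemmas Ggnz = G1nz[OF HF gH snpg \<delta>2 llg]

lemma hd_DERIV: "h \<in> H \<Longrightarrow> \<forall>\<^sub>F t in at_top. DERIV (hderiv j h) t :> hderiv (Suc j) h t"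
  using H_DERIV[OF HF H_hderiv[OF HF, of h j]] by (simp add: hderiv_Suc)

lemma down_step:
  assumes lim: "((\<lambda>t. hderiv (Suc j) f t / hderiv (Suc j) g t) \<longlongrightarrow> c) at_top" and c: "c \<noteq> 0"
  shows "((\<lambda>t. hderiv j f t / hderiv j g t) \<longlongrightarrow> c) at_top"
proof -
  have Df: "\<forall>\<^sub>F t in at_top. DERIV (hderiv j f) t :> hderiv (Suc j) f t" by (rule hd_DERIV[OF fH])
  have Dg: "\<forall>\<^sub>F t in at_top. DERIV (hderiv j g) t :> hderiv (Suc j) g t" by (rule hd_DERIV[OF gH])
  have g'nz: "\<forall>\<^sub>F t in at_top. hderiv (Suc j) g t \<noteq> 0" by (rule Ggnz)
  from Gg[of j] have "(hderiv j g \<longlongrightarrow> 0) at_top \<or> filterlim (\<lambda>t. \<bar>hderiv j g t\<bar>) at_top at_top" by blast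
  then show ?thesis
  proof
    assume ginf: "filterlim (\<lambda>t. \<bar>hderiv j g t\<bar>) at_top at_top"
    from H_nonzero_sign[OF HF H_hderiv[OF HF gH] Ggnz[of j]]
    show ?thesis
    proof
      assume pos: "\<forall>\<^sub>F t in at_top. hderiv j g t > 0"
      have "filterlim (hderiv j g) at_top at_top"
        by (rule filterlim_cong[THEN iffD1, OF refl refl _ ginf]) (use pos in \<open>auto elim: eventually_mono\<close>)
      then show ?thesis by (rule lhospital_at_top_at_top[OF _ g'nz Df Dg lim])
    next
      assume neg: "\<forall>\<^sub>F t in at_top. hderiv j g t < 0"
      have "filterlim (\<lambda>t. - hderiv j g t) at_top at_top"
        by (rule filterlim_cong[THEN iffD1, OF refl refl _ ginf]) (use neg in \<open>auto elim: eventually_mono\<close>)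
      moreover have "\<forall>\<^sub>F t in at_top. - hderiv (Suc j) g t \<noteq> 0" using g'nz by (rule eventually_mono) simp
      moreover have "\<forall>\<^sub>F t in at_top. DERIV (\<lambda>t. - hderiv j f t) t :> - hderiv (Suc j) f t"
        using Df by (rule eventually_mono) (rule DERIV_minus)
      moreover have "\<forall>\<^sub>F t in at_top. DERIV (\<lambda>t. - hderiv j g t) t :> - hderiv (Suc j) g t"
        using Dg by (rule eventually_mono) (rule DERIV_minus)
      moreover have "((\<lambda>t. - hderiv (Suc j) f t / - hderiv (Suc j) g t) \<longlongrightarrow> c) at_top"
        using lim by simp
      ultimately have "((\<lambda>t. - hderiv j f t / - hderiv j g t) \<longlongrightarrow> c) at_top"
        by (rule lhospital_at_top_at_top)
      then show ?thesis by simp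
    qed
  next
    assume g0: "(hderiv j g \<longlongrightarrow> 0) at_top"
    have f0: "(hderiv j f \<longlongrightarrow> 0) at_top"
    proof -
      from Gf[of j] have "(hderiv j f \<longlongrightarrow> 0) at_top \<or> filterlim (\<lambda>t. \<bar>hderiv j f t\<bar>) at_top at_top" by blast
      then show ?thesis
      proof
        assume finf: "filterlim (\<lambda>t. \<bar>hderiv j f t\<bar>) at_top at_top"
        define M where "M = 1 / (2 * \<bar>c\<bar>)"
        have M: "M > 0" using c unfolding M_def by simp
        have "\<bar>c\<bar> < 2 * \<bar>c\<bar>" using c by simp
        from order_tendstoD(2)[OF tendsto_rabs[OF lim] this]
        have r: "\<forall>\<^sub>F t in at_top. \<bar>hderiv (Suc j) f t / hderiv (Suc j) g t\<bar> < 2 * \<bar>c\<bar>" .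
        have "\<forall>\<^sub>F t in at_top. M/2 * \<bar>hderiv j f t\<bar> \<le> \<bar>hderiv j g t\<bar>"
        proof (rule cm_inf[OF _ M finf, where u' = "hderiv (Suc j) g" and v' = "hderiv (Suc j) f"])
          show "\<forall>\<^sub>F x in at_top. DERIV (hderiv j g) x :> hderiv (Suc j) g x \<and> DERIV (hderiv j f) x :> hderiv (Suc j) f x \<and>
              hderiv (Suc j) f x \<noteq> 0 \<and> M * \<bar>hderiv (Suc j) f x\<bar> \<le> \<bar>hderiv (Suc j) g x\<bar>"
            using Dg Df Gfnz[of "Suc j"] g'nz r
          proof eventually_elim
            case (elim x)
            then have "\<bar>hderiv (Suc j) f x\<bar> < 2 * \<bar>c\<bar> * \<bar>hderiv (Suc j) g x\<bar>"
              by (simp add: abs_divide divide_less_eq)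
            then have "M * \<bar>hderiv (Suc j) f x\<bar> \<le> \<bar>hderiv (Suc j) g x\<bar>"
              using c unfolding M_def by (simp add: field_simps)
            with elim show ?case by simp
          qed
        qed
        moreover have "\<forall>\<^sub>F t in at_top. 2 / M \<le> \<bar>hderiv j f t\<bar>" using finf unfolding filterlim_at_top by blast
        moreover have "\<forall>\<^sub>F t in at_top. \<bar>hderiv j g t\<bar> < 1"
          using order_tendstoD(2)[OF tendsto_rabs[OF g0], of 1] by simp
        ultimately have "\<forall>\<^sub>F t in at_top. M/2 * \<bar>hderiv j f t\<bar> \<le> \<bar>hderiv j g t\<bar> \<and> 2 / M \<le> \<bar>hderiv j f t\<bar> \<and> \<bar>hderiv j g t\<bar> < 1"
          by eventually_elim blast
        then have False
        proof (rule ev_contra)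
          fix t assume elim: "M/2 * \<bar>hderiv j f t\<bar> \<le> \<bar>hderiv j g t\<bar> \<and> 2 / M \<le> \<bar>hderiv j f t\<bar> \<and> \<bar>hderiv j g t\<bar> < 1"
          have "M/2 * (2 / M) \<le> M/2 * \<bar>hderiv j f t\<bar>" using elim M by (intro mult_left_mono) auto
          then have "1 \<le> M/2 * \<bar>hderiv j f t\<bar>" using M by simp
          with elim show False by linarith
        qed
        then show ?thesis by simp
      qed
    qed
    show ?thesis by (rule lhopital_at_top_0[OF f0 g0 Ggnz g'nz Df Dg lim])
  qed
qed

lemma down_all:
  assumes lim: "((\<lambda>t. hderiv k f t / hderiv k g t) \<longlongrightarrow> c) at_top" and c: "c \<noteq> 0"
  shows "hsim f g"
proof -
  have "i \<le> k \<Longrightarrow> ((\<lambda>t. hderiv (k - i) f t / hderiv (k - i) g t) \<longlongrightarrow> c) at_top" for i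
  proof (induction i)
    case 0 then show ?case using lim by simp
  next
    case (Suc i)
    then have IH: "((\<lambda>t. hderiv (k - i) f t / hderiv (k - i) g t) \<longlongrightarrow> c) at_top" by simp
    have "k - i = Suc (k - Suc i)" using Suc.prems by simp
    with IH have "((\<lambda>t. hderiv (Suc (k - Suc i)) f t / hderiv (Suc (k - Suc i)) g t) \<longlongrightarrow> c) at_top" by simp
    from down_step[OF this c] show ?case .
  qed
  from this[of k] have "((\<lambda>t. f t / g t) \<longlongrightarrow> c) at_top" by simp
  with c show ?thesis unfolding hsim_def by blast
qed

end
end

lemma rd_ratio_pow:
  fixes F G :: real and k :: nat
  assumes "F \<noteq> 0" "G \<noteq> 0" "k > 0"
  shows "\<bar>F / G\<bar> = \<bar>(\<bar>F\<bar> powr (- 1 / real k)) / (\<bar>G\<bar> powr (- 1 / real k))\<bar> powr (- real k)"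
proof -
  have "\<bar>(\<bar>F\<bar> powr (- 1 / real k)) / (\<bar>G\<bar> powr (- 1 / real k))\<bar> = \<bar>F / G\<bar> powr (- 1 / real k)"
    by (simp add: powr_divide abs_divide)
  also have "\<dots> powr (- real k) = \<bar>F / G\<bar> powr ((- 1 / real k) * (- real k))" by (simp add: powr_powr)
  also have "(- 1 / real k) * (- real k) = 1" using assms(3) by simp
  finally show ?thesis using assms by simp
qed

context
  fixes H :: "(real \<Rightarrow> real) set"
  assumes HF: "good_hardy_field H"
begin

context
  fixes f g :: "real \<Rightarrow> real" and \<delta>1 \<delta>2 :: real
  assumes fH: "f \<in> H" and snpf: "strongly_nonpoly f" and \<delta>1: "\<delta>1 > 0" and llf: "lless (\<lambda>t. t powr \<delta>1) f"
    and gH: "g \<in> H" and snpg: "strongly_nonpoly g" and \<delta>2: "\<delta>2 > 0" and llg: "lless (\<lambda>t. t powr \<delta>2) g"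
begin

lemmas Gf' = G1[OF HF fH snpf \<delta>1 llf]
lemmas Gg' = G1[OF HF gH snpg \<delta>2 llg]
lemmas Gfnz' = G1nz[OF HF fH snpf \<delta>1 llf]
lemmas Ggnz' = G1nz[OF HF gH snpg \<delta>2 llg]
lemmas down_all' = down_all[OF HF fH snpf \<delta>1 llf gH snpg \<delta>2 llg]
lemmas hd_DERIV' = hd_DERIV[OF HF fH snpf \<delta>1 llf gH snpg \<delta>2 llg]

lemma EQ:
  assumes admf: "admissible f k" and admg: "admissible g k"
    and lim: "((\<lambda>t. \<bar>rootderiv f k t / rootderiv g k t\<bar>) \<longlongrightarrow> L) at_top" and L: "L > 0"
  shows "hsim f g"
proof -
  have k: "k > 0" using admf not_adm0[OF HF fH snpf \<delta>1 llf] by (cases k) auto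
  define q where "q = (\<lambda>t. hderiv k f t / hderiv k g t)"
  have qH: "q \<in> H" unfolding q_def by (intro H_divide[OF HF] H_hderiv[OF HF] fH gH Ggnz')
  have eq: "\<forall>\<^sub>F t in at_top. \<bar>rootderiv f k t / rootderiv g k t\<bar> powr (- real k) = \<bar>q t\<bar>"
    using Gfnz'[of k] Ggnz'[of k]
  proof eventually_elim
    case (elim t)
    from rd_ratio_pow[OF elim k] show ?case unfolding q_def rootderiv_def by (rule sym)
  qed
  have "((\<lambda>t. \<bar>rootderiv f k t / rootderiv g k t\<bar> powr (- real k)) \<longlongrightarrow> L powr (- real k)) at_top"
    by (rule tendsto_powr[OF lim tendsto_const]) (use L in simp)
  then have qlim: "((\<lambda>t. \<bar>q t\<bar>) \<longlongrightarrow> L powr (- real k)) at_top"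
    by (rule Lim_transform_eventually[OF _ eq])
  have Lp: "L powr (- real k) > 0" using L by simp
  from H_lim_abs[OF HF qH] show ?thesis
  proof
    assume "\<exists>c. (q \<longlongrightarrow> c) at_top"
    then obtain c where c: "(q \<longlongrightarrow> c) at_top" by blast
    have "\<bar>c\<bar> = L powr (- real k)"
      by (rule tendsto_unique[OF trivial_limit_at_top_linorder tendsto_rabs[OF c] qlim])
    with Lp have "c \<noteq> 0" by auto
    from down_all'[OF c[unfolded q_def] this] show ?thesis .
  next
    assume inf: "filterlim (\<lambda>x. \<bar>q x\<bar>) at_top at_top"
    have e1: "\<forall>\<^sub>F t in at_top. L powr (- real k) + 1 \<le> \<bar>q t\<bar>" using inf unfolding filterlim_at_top by blast
    have e2: "\<forall>\<^sub>F t in at_top. \<bar>q t\<bar> < L powr (- real k) + 1"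
      using order_tendstoD(2)[OF qlim, of "L powr (- real k) + 1"] by simp
    have False using eventually_conj[OF e1 e2] by (rule ev_contra) linarith
    then show ?thesis by simp
  qed
qed

lemma up_ratio:
  assumes lim: "((\<lambda>t. hderiv j f t / hderiv j g t) \<longlongrightarrow> L) at_top"
  shows "((\<lambda>t. hderiv (Suc j) f t / hderiv (Suc j) g t) \<longlongrightarrow> L) at_top"
proof -
  define u where "u = (\<lambda>t. hderiv j f t - L * hderiv j g t)"
  have uH: "u \<in> H" unfolding u_def by (intro H_diff[OF HF] H_cmult[OF HF] H_hderiv[OF HF] fH gH)
  have sp: "sprec u (hderiv j g)"
  proof -
    have "((\<lambda>t. hderiv j f t / hderiv j g t - L) \<longlongrightarrow> L - L) at_top" by (intro tendsto_diff lim tendsto_const)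
    moreover have "\<forall>\<^sub>F t in at_top. hderiv j f t / hderiv j g t - L = u t / hderiv j g t"
      using Ggnz'[of j] by (rule eventually_mono) (simp add: u_def field_simps)
    ultimately show ?thesis unfolding sprec_def by (simp add: Lim_transform_eventually)
  qed
  have dgnz: "\<forall>\<^sub>F x in at_top. deriv (hderiv j g) x \<noteq> 0" using Ggnz'[of "Suc j"] by (simp add: hderiv_Suc)
  have reg: "filterlim (\<lambda>x. \<bar>hderiv j g x\<bar>) at_top at_top \<or> (hderiv j g \<longlongrightarrow> 0) at_top" using Gg'[of j] by blast
  from up_sprec[OF HF uH H_hderiv[OF HF gH] Ggnz' dgnz reg sp]
  have "((\<lambda>t. deriv u t / deriv (hderiv j g) t) \<longlongrightarrow> 0) at_top" unfolding sprec_def .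
  moreover have "\<forall>\<^sub>F t in at_top. deriv u t / deriv (hderiv j g) t = hderiv (Suc j) f t / hderiv (Suc j) g t - L"
    using hd_DERIV'[OF fH, of j] hd_DERIV'[OF gH, of j] Ggnz'[of "Suc j"]
  proof eventually_elim
    case (elim t)
    have "DERIV u t :> hderiv (Suc j) f t - L * hderiv (Suc j) g t"
      unfolding u_def by (intro DERIV_diff DERIV_cmult elim(1,2))
    then have "deriv u t = hderiv (Suc j) f t - L * hderiv (Suc j) g t" by (rule DERIV_imp_deriv)
    then show ?case using elim(3) by (simp add: hderiv_Suc field_simps)
  qed
  ultimately have "((\<lambda>t. hderiv (Suc j) f t / hderiv (Suc j) g t - L) \<longlongrightarrow> 0) at_top"
    by (rule Lim_transform_eventually)
  from tendsto_add[OF this tendsto_const[of L]] show ?thesis by simp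
qed

lemma all_ratio:
  assumes lim: "((\<lambda>t. f t / g t) \<longlongrightarrow> L) at_top"
  shows "((\<lambda>t. hderiv j f t / hderiv j g t) \<longlongrightarrow> L) at_top"
  by (induction j) (use lim in simp, rule up_ratio)

lemma S_sub:
  assumes lim: "((\<lambda>t. f t / g t) \<longlongrightarrow> L) at_top" and L: "L \<noteq> 0"
  shows "S H f k \<subseteq> S H g k"
proof
  fix h assume h: "h \<in> S H f k"
  have r1: "((\<lambda>t. rootderiv f k t / rootderiv g k t) \<longlongrightarrow> \<bar>L\<bar> powr (- 1 / real k)) at_top"
    unfolding rootderiv_def by (rule rd_ratio[OF all_ratio[OF lim] L Ggnz'])
  have r2: "((\<lambda>t. rootderiv f (Suc k) t / rootderiv g (Suc k) t) \<longlongrightarrow> \<bar>L\<bar> powr (- 1 / real (Suc k))) at_top"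
    unfolding rootderiv_def by (rule rd_ratio[OF all_ratio[OF lim] L Ggnz'])
  from h have hH: "h \<in> H" and w: "wprec (rootderiv f k) h" and s: "sprec h (rootderiv f (Suc k))"
    unfolding S_def by auto
  have "wprec (rootderiv g k) h"
    by (rule wprec_transfer[OF w r1]) (use L RP[OF HF fH snpf \<delta>1 llf, of k] in auto)
  moreover have "sprec h (rootderiv g (Suc k))"
    by (rule sprec_transfer[OF s r2]) (use RP[OF HF fH snpf \<delta>1 llf, of "Suc k"] in \<open>auto elim: eventually_mono\<close>)
  ultimately show "h \<in> S H g k" using hH unfolding S_def by simp
qed

lemma rf_chain:
  assumes adm: "admissible f m"
  shows "\<forall>\<^sub>F t in at_top. rootderiv f m t \<le> rootderiv f (m + n) t"
proof (induction n)
  case 0 show ?case by simp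
next
  case (Suc n)
  have adm': "admissible f (m + n)" by (rule adm_mono[OF HF fH snpf \<delta>1 llf adm]) simp
  from L2[OF HF fH snpf \<delta>1 llf adm'] have sp: "sprec (rootderiv f (m + n)) (rootderiv f (Suc (m + n)))" .
  have "\<forall>\<^sub>F t in at_top. \<bar>rootderiv f (m + n) t\<bar> < 1 * \<bar>rootderiv f (Suc (m + n)) t\<bar>"
    by (rule sprec_small[OF sp]) (use RP[OF HF fH snpf \<delta>1 llf, of "Suc (m + n)"] in \<open>auto elim: eventually_mono\<close>)
  with Suc show ?case
    by eventually_elim (simp add: rootderiv_def)
qed

lemma part2a:
  assumes gf: "lless g f" and admf: "admissible f k" and admg: "admissible g l"
    and h1: "h \<in> S H f k" and h2: "h \<in> S H g l"
  shows "l \<le> k"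
proof (rule ccontr)
  assume "\<not> l \<le> k"
  then have kl: "Suc k \<le> l" by simp
  from h2 have w: "wprec (rootderiv g l) h" unfolding S_def by auto
  from h1 have s: "sprec h (rootderiv f (Suc k))" unfolding S_def by auto
  have rgpos: "\<forall>\<^sub>F t in at_top. rootderiv g l t > 0" by (rule RP[OF HF gH snpg \<delta>2 llg])
  from wprec_lower[OF w] rgpos obtain c1 where c1: "c1 > 0" "\<forall>\<^sub>F t in at_top. c1 * \<bar>rootderiv g l t\<bar> \<le> \<bar>h t\<bar>"
    by (metis (mono_tags, lifting) eventually_mono less_numeral_extra(3))
  have "lless (hderiv l g) (hderiv l f)" by (rule L1gen[OF HF gH fH Gf' gf])
  from rd_lower_lless[OF HF this Gfnz' Ggnz', of l] obtain c2 where c2: "c2 > 0"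
    "\<forall>\<^sub>F t in at_top. c2 * rootderiv f l t \<le> rootderiv g l t" unfolding rootderiv_def by blast
  have adm1: "admissible f (Suc k)" by (rule adm_mono[OF HF fH snpf \<delta>1 llf admf]) simp
  from rf_chain[OF adm1, of "l - Suc k"] kl have ch: "\<forall>\<^sub>F t in at_top. rootderiv f (Suc k) t \<le> rootderiv f l t" by simp
  have sm: "\<forall>\<^sub>F t in at_top. \<bar>h t\<bar> < (c1 * c2) * \<bar>rootderiv f (Suc k) t\<bar>"
    by (rule sprec_small[OF s]) (use c1 c2 RP[OF HF fH snpf \<delta>1 llf, of "Suc k"] in \<open>auto elim: eventually_mono\<close>)
  have False
    using eventually_conj[OF c1(2) eventually_conj[OF c2(2) eventually_conj[OF ch eventually_conj[OF sm
          eventually_conj[OF rgpos RP[OF HF fH snpf \<delta>1 llf, of "Suc k"]]]]]]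
  proof (rule ev_contra)
    fix t
    assume A: "c1 * \<bar>rootderiv g l t\<bar> \<le> \<bar>h t\<bar> \<and> c2 * rootderiv f l t \<le> rootderiv g l t \<and>
      rootderiv f (Suc k) t \<le> rootderiv f l t \<and> \<bar>h t\<bar> < c1 * c2 * \<bar>rootderiv f (Suc k) t\<bar> \<and>
      0 < rootderiv g l t \<and> 0 < rootderiv f (Suc k) t"
    have "c1 * c2 * rootderiv f (Suc k) t \<le> c1 * c2 * rootderiv f l t"
      using A c1 c2 by (intro mult_left_mono) auto
    also have "\<dots> = c1 * (c2 * rootderiv f l t)" by simp
    also have "\<dots> \<le> c1 * rootderiv g l t" using A c1 by (intro mult_left_mono) auto
    finally have X: "c1 * c2 * rootderiv f (Suc k) t \<le> c1 * rootderiv g l t" .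
    have a1: "\<bar>rootderiv g l t\<bar> = rootderiv g l t" using A by simp
    have a2: "\<bar>rootderiv f (Suc k) t\<bar> = rootderiv f (Suc k) t" using A by simp
    show False using X A unfolding a1 a2 by linarith
  qed
  then show False .
qed

lemma part2b:
  assumes gf: "lless g f" and admf: "admissible f k" and admg: "admissible g l"
    and r: "rootderiv f k \<in> S H g l" and ns: "\<not> hsim f g"
  shows "l + 1 \<le> k"
proof -
  have self: "rootderiv f k \<in> S H f k" by (rule self_in_S[OF HF fH snpf \<delta>1 llf admf])
  have lk: "l \<le> k" by (rule part2a[OF gf admf admg self r])
  show ?thesis
  proof (rule ccontr)
    assume "\<not> l + 1 \<le> k"
    with lk have lk: "l = k" by simp
    from r have w: "wprec (rootderiv g k) (rootderiv f k)" unfolding S_def lk by auto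
    have "lless (hderiv k g) (hderiv k f)" by (rule L1gen[OF HF gH fH Gf' gf])
    from rd_lower_lless[OF HF this Gfnz' Ggnz', of k] obtain c2 where c2: "c2 > 0"
      "\<forall>\<^sub>F t in at_top. c2 * rootderiv f k t \<le> rootderiv g k t" unfolding rootderiv_def by blast
    have bnd: "\<forall>\<^sub>F t in at_top. \<bar>rootderiv f k t / rootderiv g k t\<bar> \<le> 1 / c2"
      using c2(2) RP[OF HF gH snpg \<delta>2 llg, of k] RP[OF HF fH snpf \<delta>1 llf, of k]
    proof eventually_elim
      case (elim t)
      then show ?case using c2(1) by (simp add: abs_divide field_simps)
    qed
    from w show False unfolding wprec_def
    proof
      assume "\<exists>L>0. ((\<lambda>t. \<bar>rootderiv f k t / rootderiv g k t\<bar>) \<longlongrightarrow> L) at_top"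
      then obtain L where "L > 0" "((\<lambda>t. \<bar>rootderiv f k t / rootderiv g k t\<bar>) \<longlongrightarrow> L) at_top" by blast
      from EQ[OF admf admg[unfolded lk] this(2) this(1)] ns show False by simp
    next
      assume "filterlim (\<lambda>t. \<bar>rootderiv f k t / rootderiv g k t\<bar>) at_top at_top"
      then have big: "\<forall>\<^sub>F t in at_top. 1 / c2 + 1 \<le> \<bar>rootderiv f k t / rootderiv g k t\<bar>"
        unfolding filterlim_at_top by blast
      show False using eventually_conj[OF big bnd] by (rule ev_contra) linarith
    qed
  qed
qed

end
end

lemma nat_above: "real (nat \<lceil>x\<rceil> + 1) > x"
  by linarith

context
  fixes H :: "(real \<Rightarrow> real) set"
  assumes HF: "good_hardy_field H"
begin

lemma rf_up:
  assumes fH: "f \<in> H" and snp: "strongly_nonpoly f" and \<delta>: "\<delta> > 0" and ll: "lless (\<lambda>t. t powr \<delta>) f"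
    and k: "k > 0"
  shows "\<exists>K>0. \<forall>\<^sub>F t in at_top. rootderiv f k t \<le> K * t powr (1 - min \<delta> (1/2) / real k)"
proof -
  from LB[OF HF fH snp \<delta> ll, of k] obtain c where c: "c > 0"
    "\<forall>\<^sub>F t in at_top. c * t powr (min \<delta> (1/2) - real k) \<le> \<bar>hderiv k f t\<bar>" by blast
  have "\<forall>\<^sub>F t in at_top. rootderiv f k t \<le> c powr (- 1 / real k) * t powr (1 - min \<delta> (1/2) / real k)"
    using c(2) eventually_gt_at_top[of 0]
    by eventually_elim (unfold rootderiv_def, rule rd_pw_up[OF k _ c(1)], auto)
  moreover have "c powr (- 1 / real k) > 0" using c by simp
  ultimately show ?thesis by blast
qed

lemma rf_low:
  assumes fH: "f \<in> H" and snp: "strongly_nonpoly f" and \<delta>: "\<delta> > 0" and ll: "lless (\<lambda>t. t powr \<delta>) f"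
    and k: "k > 0" and D: "sprec f (\<lambda>t. t ^ (D + 1))"
  shows "\<exists>K>0. \<forall>\<^sub>F t in at_top. K * t powr (1 - (real D + 3/2) / real k) \<le> rootderiv f k t"
proof -
  from UB[OF HF fH snp \<delta> ll D, of k] obtain C where C:
    "\<forall>\<^sub>F t in at_top. \<bar>hderiv k f t\<bar> \<le> C * t powr (real D + 3/2 - real k)" by blast
  have "\<forall>\<^sub>F t in at_top. (\<bar>C\<bar> + 1) powr (- 1 / real k) * t powr (1 - (real D + 3/2) / real k) \<le> rootderiv f k t"
    using C eventually_gt_at_top[of 0] G1nz[OF HF fH snp \<delta> ll, of k]
    by eventually_elim (unfold rootderiv_def, rule rd_pw_low[OF k], auto)
  moreover have "(\<bar>C\<bar> + 1) powr (- 1 / real k) > 0" by (simp add: add_pos_nonneg)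
  ultimately show ?thesis by blast
qed

context
  fixes f g :: "real \<Rightarrow> real" and \<delta>1 \<delta>2 :: real
  assumes fH: "f \<in> H" and snpf: "strongly_nonpoly f" and \<delta>1: "\<delta>1 > 0" and llf: "lless (\<lambda>t. t powr \<delta>1) f"
    and gH: "g \<in> H" and snpg: "strongly_nonpoly g" and \<delta>2: "\<delta>2 > 0" and llg: "lless (\<lambda>t. t powr \<delta>2) g"
begin

lemma pair_exists:
  assumes Df: "sprec f (\<lambda>t. t ^ (Df + 1))" and Dg: "sprec g (\<lambda>t. t ^ (Dg + 1))"
    and k: "k \<ge> max (Df + 2) (nat \<lceil>(real Df + 3/2) * real (Dg + 2) / min \<delta>2 (1/2)\<rceil> + 1)"
  shows "\<exists>l. admissible f k \<and> admissible g l \<and> S H f k \<inter> S H g l \<noteq> {}"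
proof -
  define af where "af = real Df + 3/2"
  define ag where "ag = real Dg + 3/2"
  define e1 where "e1 = min \<delta>1 (1/2)"
  define e2 where "e2 = min \<delta>2 (1/2)"
  define L0 where "L0 = Dg + 2"
  have e1: "e1 > 0" unfolding e1_def using \<delta>1 by simp
  have e2: "e2 > 0" unfolding e2_def using \<delta>2 by simp
  have L0: "L0 > 0" unfolding L0_def by simp
  have kpos: "k > 0" using k by simp
  have admf: "admissible f k" by (rule adm_large[OF HF fH snpf \<delta>1 llf Df]) (use k in simp)
  have admg: "admissible g l" if "l \<ge> L0" for l by (rule adm_large[OF HF gH snpg \<delta>2 llg Dg]) (use that in \<open>simp add: L0_def\<close>)
  have kbig: "real k > af * real L0 / e2"
    using k nat_above[of "af * real L0 / e2"] unfolding af_def L0_def e2_def by linarith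
  define p where "p = e2 / real L0 - af / real k"
  have p: "p > 0"
  proof -
    have "af * real L0 < real k * e2" using kbig e2 by (simp add: field_simps)
    then have "af / real k < e2 / real L0" using kpos L0 by (simp add: field_simps)
    then show ?thesis unfolding p_def by simp
  qed
  from rf_low[OF fH snpf \<delta>1 llf kpos Df] obtain Kf1 where Kf1: "Kf1 > 0"
    "\<forall>\<^sub>F t in at_top. Kf1 * t powr (1 - af / real k) \<le> rootderiv f k t" unfolding af_def by blast
  from rf_up[OF gH snpg \<delta>2 llg L0] obtain Kg1 where Kg1: "Kg1 > 0"
    "\<forall>\<^sub>F t in at_top. rootderiv g L0 t \<le> Kg1 * t powr (1 - e2 / real L0)" unfolding e2_def by blast
  have w0: "wprec (rootderiv g L0) (rootderiv f k)"
  proof -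
    have "filterlim (\<lambda>t. (Kf1 / Kg1) * t powr p) at_top at_top"
      by (rule filterlim_tendsto_pos_mult_at_top[OF tendsto_const _ powr_at_top_real[OF p]]) (use Kf1 Kg1 in simp)
    moreover have "\<forall>\<^sub>F t in at_top. (Kf1 / Kg1) * t powr p \<le> \<bar>rootderiv f k t / rootderiv g L0 t\<bar>"
      using Kf1(2) Kg1(2) RP[OF HF gH snpg \<delta>2 llg, of L0] eventually_gt_at_top[of 0]
    proof eventually_elim
      case (elim t)
      have "(Kf1 * t powr (1 - af / real k)) / (Kg1 * t powr (1 - e2 / real L0)) \<le> rootderiv f k t / rootderiv g L0 t"
        by (rule frac_le) (use elim Kf1 Kg1 in \<open>auto simp: rootderiv_def\<close>)
      moreover have "(Kf1 * t powr (1 - af / real k)) / (Kg1 * t powr (1 - e2 / real L0)) = (Kf1 / Kg1) * t powr p"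
      proof -
        have "t powr p = t powr ((1 - af / real k) - (1 - e2 / real L0))" unfolding p_def by simp
        also have "\<dots> = t powr (1 - af / real k) / t powr (1 - e2 / real L0)" by (rule powr_diff)
        finally show ?thesis by (simp only: times_divide_times_eq)
      qed
      ultimately show ?case by linarith
    qed
    ultimately have "filterlim (\<lambda>t. \<bar>rootderiv f k t / rootderiv g L0 t\<bar>) at_top at_top"
      by (rule filterlim_at_top_mono)
    then show ?thesis unfolding wprec_def by blast
  qed
  define l' where "l' = max (L0 + 1) (nat \<lceil>ag * real k / e1\<rceil> + 1)"
  have l'L0: "L0 < l'" unfolding l'_def by simp
  have l'pos: "l' > 0" using l'L0 by simp
  have lbig: "real l' > ag * real k / e1"
    using nat_above[of "ag * real k / e1"] unfolding l'_def by linarith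
  define q where "q = ag / real l' - e1 / real k"
  have q: "q < 0"
  proof -
    have "ag * real k < real l' * e1" using lbig e1 by (simp add: field_simps)
    then have "ag / real l' < e1 / real k" using kpos l'pos by (simp add: field_simps)
    then show ?thesis unfolding q_def by simp
  qed
  from rf_up[OF fH snpf \<delta>1 llf kpos] obtain Kf2 where Kf2: "Kf2 > 0"
    "\<forall>\<^sub>F t in at_top. rootderiv f k t \<le> Kf2 * t powr (1 - e1 / real k)" unfolding e1_def by blast
  from rf_low[OF gH snpg \<delta>2 llg l'pos Dg] obtain Kg2 where Kg2: "Kg2 > 0"
    "\<forall>\<^sub>F t in at_top. Kg2 * t powr (1 - ag / real l') \<le> rootderiv g l' t" unfolding ag_def by blast
  have s': "sprec (rootderiv f k) (rootderiv g l')"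
    unfolding sprec_def
  proof (rule Lim_null_comparison)
    show "\<forall>\<^sub>F t in at_top. norm (rootderiv f k t / rootderiv g l' t) \<le> (Kf2 / Kg2) * t powr q"
      using Kf2(2) Kg2(2) RP[OF HF fH snpf \<delta>1 llf, of k] eventually_gt_at_top[of 0]
    proof eventually_elim
      case (elim t)
      have "rootderiv f k t / rootderiv g l' t \<le> (Kf2 * t powr (1 - e1 / real k)) / (Kg2 * t powr (1 - ag / real l'))"
        by (rule frac_le) (use elim Kf2 Kg2 in auto)
      moreover have "(Kf2 * t powr (1 - e1 / real k)) / (Kg2 * t powr (1 - ag / real l')) = (Kf2 / Kg2) * t powr q"
      proof -
        have "t powr q = t powr ((1 - e1 / real k) - (1 - ag / real l'))" unfolding q_def by simp
        also have "\<dots> = t powr (1 - e1 / real k) / t powr (1 - ag / real l')" by (rule powr_diff)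
        finally show ?thesis by (simp only: times_divide_times_eq)
      qed
      moreover have "rootderiv f k t / rootderiv g l' t \<ge> 0" using elim by (simp add: rootderiv_def)
      ultimately show ?case by simp
    qed
    have "((\<lambda>t. (Kf2 / Kg2) * t powr q) \<longlongrightarrow> (Kf2 / Kg2) * 0) at_top"
      by (intro tendsto_mult tendsto_const powr_tendsto_zero_real q)
    then show "((\<lambda>t. (Kf2 / Kg2) * t powr q) \<longlongrightarrow> 0) at_top" by simp
  qed
  define Ls where "Ls = {l. L0 \<le> l \<and> l \<le> l' \<and> wprec (rootderiv g l) (rootderiv f k)}"
  have finLs: "finite Ls" unfolding Ls_def by (rule finite_subset[of _ "{..l'}"]) auto
  have L0Ls: "L0 \<in> Ls" unfolding Ls_def using w0 l'L0 by simp
  define l0 where "l0 = Max Ls"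
  have l0Ls: "l0 \<in> Ls" unfolding l0_def using finLs L0Ls by (intro Max_in) auto
  have l0max: "l \<le> l0" if "l \<in> Ls" for l unfolding l0_def using finLs that by simp
  have l0ne: "l0 \<noteq> l'"
  proof
    assume "l0 = l'"
    with l0Ls have "wprec (rootderiv g l') (rootderiv f k)" unfolding Ls_def by simp
    from sprec_not_wprec[OF s' this] show False .
  qed
  with l0Ls have l0l': "Suc l0 \<le> l'" unfolding Ls_def by simp
  have l0L0: "L0 \<le> l0" using l0Ls unfolding Ls_def by simp
  have "Suc l0 \<notin> Ls" using l0max[of "Suc l0"] by auto
  then have nw: "\<not> wprec (rootderiv g (Suc l0)) (rootderiv f k)" unfolding Ls_def using l0L0 l0l' by simp
  have admg1: "admissible g (Suc l0)" by (rule admg) (use l0L0 in simp)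
  have rfH: "rootderiv f k \<in> H" by (rule RH[OF HF fH snpf \<delta>1 llf admf])
  have rgH: "rootderiv g (Suc l0) \<in> H" by (rule RH[OF HF gH snpg \<delta>2 llg admg1])
  have rgnz: "\<forall>\<^sub>F t in at_top. rootderiv g (Suc l0) t \<noteq> 0"
    using RP[OF HF gH snpg \<delta>2 llg, of "Suc l0"] by (rule eventually_mono) simp
  from ratio_trich[OF HF rfH rgH rgnz] nw have sp: "sprec (rootderiv f k) (rootderiv g (Suc l0))" by blast
  have w: "wprec (rootderiv g l0) (rootderiv f k)" using l0Ls unfolding Ls_def by simp
  have "rootderiv f k \<in> S H g l0" unfolding S_def using rfH w sp by simp
  moreover have "rootderiv f k \<in> S H f k" by (rule self_in_S[OF HF fH snpf \<delta>1 llf admf])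
  ultimately have "S H f k \<inter> S H g l0 \<noteq> {}" by blast
  with admf admg[OF l0L0] show ?thesis by blast
qed

lemma part3: "infinite {(k, l). admissible f k \<and> admissible g l \<and> S H f k \<inter> S H g l \<noteq> {}}"
proof
  define P where "P = {(k, l). admissible f k \<and> admissible g l \<and> S H f k \<inter> S H g l \<noteq> {}}"
  assume "finite {(k, l). admissible f k \<and> admissible g l \<and> S H f k \<inter> S H g l \<noteq> {}}"
  then have fin: "finite P" unfolding P_def .
  from snpf obtain df where Df: "sprec f (\<lambda>t. t ^ (df + 1))" unfolding strongly_nonpoly_def by blast
  from snpg obtain dg where Dg: "sprec g (\<lambda>t. t ^ (dg + 1))" unfolding strongly_nonpoly_def by blast
  define K1 where "K1 = max (df + 2) (nat \<lceil>(real df + 3/2) * real (dg + 2) / min \<delta>2 (1/2)\<rceil> + 1)"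
  have "finite (fst ` P)" by (rule finite_imageI[OF fin])
  then obtain m where m: "\<And>x. x \<in> fst ` P \<Longrightarrow> x \<le> m"
    using finite_nat_set_iff_bounded_le by metis
  define k where "k = max K1 (Suc m)"
  have kK1: "k \<ge> K1" unfolding k_def by (rule max.cobounded1)
  from pair_exists[OF Df Dg kK1[unfolded K1_def]] obtain l
    where l: "admissible f k \<and> admissible g l \<and> S H f k \<inter> S H g l \<noteq> {}" by blast
  have "(k, l) \<in> P" unfolding P_def using l by simp
  then have "k \<in> fst ` P" by (rule rev_image_eqI) simp
  then have "k \<le> m" by (rule m)
  then show False unfolding k_def by simp
qed

end
end

theorem propositionA4:
  fixes H :: "(real \<Rightarrow> real) set" and f g :: "real \<Rightarrow> real" and \<delta>1 \<delta>2 :: real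
  assumes "good_hardy_field H"
    and "f \<in> H" and "g \<in> H"
    and "strongly_nonpoly f" and "strongly_nonpoly g"
    and "\<delta>1 > 0" and "\<delta>2 > 0"
    and "lless (\<lambda>t. t powr \<delta>1) f" and "lless (\<lambda>t. t powr \<delta>2) g"
    and "lless g f"
  shows "((\<exists>k. admissible f k \<and> admissible g k \<and> S H f k = S H g k) \<longleftrightarrow> hsim f g)
    \<and> (\<forall>k l. admissible f k \<longrightarrow> admissible g l \<longrightarrow> S H f k \<inter> S H g l \<noteq> {} \<longrightarrow> k \<ge> l)
    \<and> (\<forall>k l. admissible f k \<longrightarrow> admissible g l \<longrightarrow> rootderiv f k \<in> S H g l \<longrightarrow>
           \<not> hsim f g \<longrightarrow> k \<ge> l + 1)
    \<and> infinite {(k, l). admissible f k \<and> admissible g l \<and> S H f k \<inter> S H g l \<noteq> {}}"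
proof -
  note HF = assms(1) and fH = assms(2) and gH = assms(3) and snpf = assms(4) and snpg = assms(5)
    and \<delta>1 = assms(6) and \<delta>2 = assms(7) and llf = assms(8) and llg = assms(9) and gf = assms(10)
  have i: "(\<exists>k. admissible f k \<and> admissible g k \<and> S H f k = S H g k) \<longleftrightarrow> hsim f g"
  proof
    assume "\<exists>k. admissible f k \<and> admissible g k \<and> S H f k = S H g k"
    then obtain k where k: "admissible f k" "admissible g k" "S H f k = S H g k" by blast
    have a: "rootderiv f k \<in> S H g k" using self_in_S[OF HF fH snpf \<delta>1 llf k(1)] k(3) by simp
    have b: "rootderiv g k \<in> S H f k" using self_in_S[OF HF gH snpg \<delta>2 llg k(2)] k(3) by simp
    from a have w1: "wprec (rootderiv g k) (rootderiv f k)" unfolding S_def by simp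
    from b have w2: "wprec (rootderiv f k) (rootderiv g k)" unfolding S_def by simp
    from wprec_both[OF w1 w2] obtain L where L: "L > 0"
      "((\<lambda>t. \<bar>rootderiv f k t / rootderiv g k t\<bar>) \<longlongrightarrow> L) at_top" by blast
    show "hsim f g" by (rule EQ[OF HF fH snpf \<delta>1 llf gH snpg \<delta>2 llg k(1) k(2) L(2) L(1)])
  next
    assume "hsim f g"
    then obtain L where L: "L \<noteq> 0" "((\<lambda>t. f t / g t) \<longlongrightarrow> L) at_top" unfolding hsim_def by blast
    from snpf obtain df where Df: "sprec f (\<lambda>t. t ^ (df + 1))" unfolding strongly_nonpoly_def by blast
    from snpg obtain dg where Dg: "sprec g (\<lambda>t. t ^ (dg + 1))" unfolding strongly_nonpoly_def by blast
    define k where "k = max df dg + 2"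
    have admf: "admissible f k" by (rule adm_large[OF HF fH snpf \<delta>1 llf Df]) (simp add: k_def)
    have admg: "admissible g k" by (rule adm_large[OF HF gH snpg \<delta>2 llg Dg]) (simp add: k_def)
    have s1: "S H f k \<subseteq> S H g k" by (rule S_sub[OF HF fH snpf \<delta>1 llf gH snpg \<delta>2 llg L(2) L(1)])
    have L2: "((\<lambda>t. g t / f t) \<longlongrightarrow> inverse L) at_top" using tendsto_inverse[OF L(2) L(1)] by simp
    have s2: "S H g k \<subseteq> S H f k" by (rule S_sub[OF HF gH snpg \<delta>2 llg fH snpf \<delta>1 llf L2]) (use L in simp)
    from admf admg s1 s2 show "\<exists>k. admissible f k \<and> admissible g k \<and> S H f k = S H g k" by blast
  qed
  have ii: "\<forall>k l. admissible f k \<longrightarrow> admissible g l \<longrightarrow> S H f k \<inter> S H g l \<noteq> {} \<longrightarrow> k \<ge> l"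
  proof (intro allI impI)
    fix k l assume admf: "admissible f k" and admg: "admissible g l" and ne: "S H f k \<inter> S H g l \<noteq> {}"
    then obtain h where h: "h \<in> S H f k" "h \<in> S H g l" by blast
    show "k \<ge> l" by (rule part2a[OF HF fH snpf \<delta>1 llf gH snpg \<delta>2 llg gf admf admg h])
  qed
  have iii: "\<forall>k l. admissible f k \<longrightarrow> admissible g l \<longrightarrow> rootderiv f k \<in> S H g l \<longrightarrow>
           \<not> hsim f g \<longrightarrow> k \<ge> l + 1"
  proof (intro allI impI)
    fix k l assume admf: "admissible f k" and admg: "admissible g l" and r: "rootderiv f k \<in> S H g l"
      and ns: "\<not> hsim f g"
    show "k \<ge> l + 1" by (rule part2b[OF HF fH snpf \<delta>1 llf gH snpg \<delta>2 llg gf admf admg r ns])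
  qed
  have iv: "infinite {(k, l). admissible f k \<and> admissible g l \<and> S H f k \<inter> S H g l \<noteq> {}}"
    by (rule part3[OF HF fH snpf \<delta>1 llf gH snpg \<delta>2 llg])
  show ?thesis using i ii iii iv by blast
qed

end
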